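(* Let $X=\{x_1,\dots,x_n\}$ be a finite biquandle and let $K$ be a knotoid in $S^2$ or in $\mathbb{R}^2$. For a diagram $D$ of $K$ and $1\le j,k\le n$, let $\mathcal{C}_{jk}(D)$ be the set of $X$-colorings of $D$ in which the initial semiarc (the semiarc incident to the tail) is colored $x_j$ and the final semiarc (the semiarc incident to the head) is colored $x_k$. Define the $n\times n$ matrix $\Phi_X^{M_n}(D)$ whose entry in row $j$, column $k$ is $|\mathcal{C}_{jk}(D)|$. Then $\Phi_X^{M_n}(D)$ does not depend on the choice of diagram $D$ of $K$; that is, if $D$ and $D'$ are two knotoid diagrams representing the same knotoid, then $\Phi_X^{M_n}(D)=\Phi_X^{M_n}(D')$. Hence $\Phi_X^{M_n}(K):=\Phi_X^{M_n}(D)$ is an invariant of knotoids.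
   Context: A biquandle is a set $X$ together with, for each $b\in X$, two bijections $\alpha_b,\beta_b:X\to X$ such that: (i) $\alpha_a(a)=\beta_a(a)$ for all $a\in X$; (ii) the map $S:X\times X\to X\times X$, $S(a,b)=(\alpha_a(b),\beta_b(a))$, is invertible; (iii) for all $a,b\in X$: $\alpha_{\alpha_a(b)}\alpha_a=\alpha_{\beta_b(a)}\alpha_b$, $\beta_{\alpha_a(b)}\alpha_a=\alpha_{\beta_b(a)}\beta_b$, and $\beta_{\beta_a(b)}\beta_a=\beta_{\alpha_b(a)}\beta_b$. A knotoid diagram in a surface $\Sigma$ ($\Sigma=S^2$ or $\mathbb{R}^2$) is a generic immersion of $[0,1]$ into $\Sigma$ whose only singularities are finitely many transverse double points (crossings) endowed with over/under information, oriented from the image of $0$ (the tail) to the image of $1$ (the head), the tail and head being distinct points which are not crossings. A knotoid is an equivalence class of knotoid diagrams under isotopy of $\Sigma$ and the three Reidemeister moves performed in disks disjoint from the tail and the head (in particular, moving an endpoint over or under a transverse strand is not allowed). A semiarc of a diagram is a piece of the curve connecting two consecutive crossings, or an endpoint to a crossing (or, for a crossingless diagram, the whole curve). Crossings carry the usual sign $\pm1$ determined by the orientation. An $X$-coloring of a knotoid diagram is an assignment of an element of $X$ to each semiarc such that at each crossing the following holds. At a positive crossing, if the incoming under-semiarc is colored $a$ and the outgoing over-semiarc is colored $b$, then the outgoing under-semiarc is colored $\beta_b(a)$ and the incoming over-semiarc is colored $\alpha_a(b)$. At a negative crossing, if the outgoing under-semiarc is colored $a$ and the incoming over-semiarc is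 colored $b$, then the incoming under-semiarc is colored $\beta_b(a)$ and the outgoing over-semiarc is colored $\alpha_a(b)$. (With this convention, for any Reidemeister move each coloring before the move corresponds to a unique coloring after the move agreeing outside the disk of the move.) *)

theory Defs
  imports "HOL-Library.FuncSet" "Jordan_Normal_Form.Matrix"
begin

definition biquandle :: "'a set \<Rightarrow> ('a \<Rightarrow> 'a \<Rightarrow> 'a) \<Rightarrow> ('a \<Rightarrow> 'a \<Rightarrow> 'a) \<Rightarrow> bool" where
  "biquandle X alpha beta \<longleftrightarrow>
     (\<forall>b\<in>X. bij_betw (alpha b) X X \<and> bij_betw (beta b) X X)
   \<and> (\<forall>a\<in>X. alpha a a = beta a a)
   \<and> bij_betw (\<lambda>(a, b). (alpha a b, beta b a)) (X \<times> X) (X \<times> X)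
   \<and> (\<forall>a\<in>X. \<forall>b\<in>X. \<forall>x\<in>X.
        alpha (alpha a b) (alpha a x) = alpha (beta b a) (alpha b x)
      \<and> beta (alpha a b) (alpha a x) = alpha (beta b a) (beta b x)
      \<and> beta (beta a b) (beta a x) = beta (alpha b a) (beta b x))"

text \<open>A knotoid diagram is encoded by its Gauss code, read from the tail to the head:
  a list of letters (l, ov, sg), one per passage of the curve through a crossing,
  where l is the label of the crossing, ov is True iff the passage is the over-strand,
  and sg is True iff the crossing is positive.
  With a code w of length n, the semiarcs are numbered 0..n along the orientation:
  the i-th letter (0-based) is the passage from semiarc i to semiarc i+1; semiarc 0 is
  the initial semiarc (at the tail) and semiarc n the final one (at the head).\<close>

type_synonym letter = "nat \<times> bool \<times> bool"

definition valid_code :: "letter list \<Rightarrow> bool" where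
  "valid_code w \<longleftrightarrow>
     (\<forall>l \<in> fst ` set w. \<exists>s. \<exists>i<length w. \<exists>j<length w.
         w ! i = (l, True, s) \<and> w ! j = (l, False, s) \<and>
         (\<forall>k<length w. fst (w ! k) = l \<longrightarrow> k = i \<or> k = j))"

section \<open>Reidemeister moves (away from the endpoints)\<close>

text \<open>Three strands T (top), M (middle), B (bottom);
  crossing x: T over M, y: T over B, z: M over B, with signs sx, sy, sz.
  oT: T meets x before y; oM: M meets x before z; oB: B meets y before z.\<close>

definition r3_seg :: "nat \<Rightarrow> nat \<Rightarrow> nat \<Rightarrow> bool \<Rightarrow> bool \<Rightarrow> bool \<Rightarrow>
    bool \<Rightarrow> bool \<Rightarrow> bool \<Rightarrow> nat \<Rightarrow> letter list" where
  "r3_seg x y z sx sy sz oT oM oB i =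
     (if i = 0 then (if oT then [(x, True, sx), (y, True, sy)] else [(y, True, sy), (x, True, sx)])
      else if i = 1 then (if oM then [(x, False, sx), (z, True, sz)] else [(z, True, sz), (x, False, sx)])
      else (if oB then [(y, False, sy), (z, False, sz)] else [(z, False, sz), (y, False, sy)]))"

text \<open>The sign/order configurations realised by three strands in a disk
  (computed from three oriented lines in general position).\<close>

definition r3_ok :: "bool \<Rightarrow> bool \<Rightarrow> bool \<Rightarrow> bool \<Rightarrow> bool \<Rightarrow> bool \<Rightarrow> bool" where
  "r3_ok sx sy sz oT oM oB \<longleftrightarrow> ((oM \<noteq> oB) = (sx \<noteq> sy)) \<and> ((oT \<noteq> oB) = (sx \<noteq> sz))"

inductive kmove :: "letter list \<Rightarrow> letter list \<Rightarrow> bool" where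
  R1: "valid_code (u @ [(l, ov, s), (l, \<not> ov, s)] @ v) \<Longrightarrow>
       kmove (u @ [(l, ov, s), (l, \<not> ov, s)] @ v) (u @ v)"
| R2_same: "valid_code (u @ [(a, ov, s), (b, ov, \<not> s)] @ v @ [(a, \<not> ov, s), (b, \<not> ov, \<not> s)] @ x) \<Longrightarrow>
       kmove (u @ [(a, ov, s), (b, ov, \<not> s)] @ v @ [(a, \<not> ov, s), (b, \<not> ov, \<not> s)] @ x) (u @ v @ x)"
| R2_opp: "valid_code (u @ [(a, ov, s), (b, ov, \<not> s)] @ v @ [(b, \<not> ov, \<not> s), (a, \<not> ov, s)] @ x) \<Longrightarrow>
       kmove (u @ [(a, ov, s), (b, ov, \<not> s)] @ v @ [(b, \<not> ov, \<not> s), (a, \<not> ov, s)] @ x) (u @ v @ x)"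
| R3: "\<lbrakk> i < 3; j < 3; k < 3; distinct [i, j, k]; r3_ok sx sy sz oT oM oB;
         valid_code (p1 @ r3_seg x y z sx sy sz oT oM oB i @ p2 @ r3_seg x y z sx sy sz oT oM oB j
                     @ p3 @ r3_seg x y z sx sy sz oT oM oB k @ p4) \<rbrakk> \<Longrightarrow>
       kmove (p1 @ r3_seg x y z sx sy sz oT oM oB i @ p2 @ r3_seg x y z sx sy sz oT oM oB j
                @ p3 @ r3_seg x y z sx sy sz oT oM oB k @ p4)
             (p1 @ r3_seg x y z sx sy sz (\<not> oT) (\<not> oM) (\<not> oB) i @ p2 @ r3_seg x y z sx sy sz (\<not> oT) (\<not> oM) (\<not> oB) j
                @ p3 @ r3_seg x y z sx sy sz (\<not> oT) (\<not> oM) (\<not> oB) k @ p4)"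
| relabel: "\<lbrakk> valid_code w; inj_on f (fst ` set w) \<rbrakk> \<Longrightarrow>
       kmove w (map (\<lambda>(l, ov, s). (f l, ov, s)) w)"

definition knotoid_equiv :: "letter list \<Rightarrow> letter list \<Rightarrow> bool" where
  "knotoid_equiv = equivclp kmove"

definition is_coloring :: "('a \<Rightarrow> 'a \<Rightarrow> 'a) \<Rightarrow> ('a \<Rightarrow> 'a \<Rightarrow> 'a) \<Rightarrow> letter list \<Rightarrow> (nat \<Rightarrow> 'a) \<Rightarrow> bool" where
  "is_coloring alpha beta w c \<longleftrightarrow>
     (\<forall>i<length w. \<forall>j<length w. \<forall>l s.
        w ! i = (l, True, s) \<longrightarrow> w ! j = (l, False, s) \<longrightarrow>
          (if s then
             \<comment> \<open>positive: a = incoming under, b = outgoing over\<close>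
             c (Suc j) = beta (c (Suc i)) (c j) \<and> c i = alpha (c j) (c (Suc i))
           else
             \<comment> \<open>negative: a = outgoing under, b = incoming over\<close>
             c j = beta (c i) (c (Suc j)) \<and> c (Suc i) = alpha (c (Suc j)) (c i)))"

definition colorings :: "'a set \<Rightarrow> ('a \<Rightarrow> 'a \<Rightarrow> 'a) \<Rightarrow> ('a \<Rightarrow> 'a \<Rightarrow> 'a) \<Rightarrow> letter list \<Rightarrow>
    'a \<Rightarrow> 'a \<Rightarrow> (nat \<Rightarrow> 'a) set" where
  "colorings X alpha beta w p q =
     {c \<in> {0..length w} \<rightarrow>\<^sub>E X. is_coloring alpha beta w c \<and> c 0 = p \<and> c (length w) = q}"

definition coloring_matrix :: "'a list \<Rightarrow> ('a \<Rightarrow> 'a \<Rightarrow> 'a) \<Rightarrow> ('a \<Rightarrow> 'a \<Rightarrow> 'a) \<Rightarrow> letter list \<Rightarrow> nat mat" where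
  "coloring_matrix xs alpha beta w =
     mat (length xs) (length xs)
       (\<lambda>(j, k). card (colorings (set xs) alpha beta w (xs ! j) (xs ! k)))"

end

theory Submission
  imports Defs
begin

definition cr :: "('a \<Rightarrow> 'a \<Rightarrow> 'a) \<Rightarrow> ('a \<Rightarrow> 'a \<Rightarrow> 'a) \<Rightarrow> bool \<Rightarrow> 'a \<Rightarrow> 'a \<Rightarrow> 'a \<Rightarrow> 'a \<Rightarrow> bool" where
  "cr alpha beta s oi oo ui uo =
    (if s then uo = beta oo ui \<and> oi = alpha ui oo else ui = beta oi uo \<and> oo = alpha uo oi)"

definition good :: "('a \<Rightarrow> 'a \<Rightarrow> 'a) \<Rightarrow> ('a \<Rightarrow> 'a \<Rightarrow> 'a) \<Rightarrow> (letter \<times> 'a \<times> 'a) set \<Rightarrow> bool" where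
  "good alpha beta S \<longleftrightarrow> (\<forall>l s a a' b b'. ((l, True, s), a, a') \<in> S \<longrightarrow> ((l, False, s), b, b') \<in> S \<longrightarrow>
      cr alpha beta s a a' b b')"

fun ann :: "letter list \<Rightarrow> 'a list \<Rightarrow> (letter \<times> 'a \<times> 'a) list" where
  "ann [] cs = []"
| "ann (x # w) cs = (x, hd cs, hd (tl cs)) # ann w (tl cs)"

lemma length_ann[simp]: "length (ann w cs) = length w"
  by (induction w arbitrary: cs) auto

lemma map_fst_ann[simp]: "map fst (ann w cs) = w"
  by (induction w arbitrary: cs) auto

lemma nth_ann: "i < length w \<Longrightarrow> length cs = Suc (length w) \<Longrightarrow> ann w cs ! i = (w ! i, cs ! i, cs ! Suc i)"
proof (induction w arbitrary: cs i)
  case Nil then show ?case by simp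
next
  case (Cons x w)
  then obtain c cs' where cs: "cs = c # cs'" by (cases cs) auto
  show ?case
  proof (cases i)
    case 0 then show ?thesis using Cons cs by (cases cs') (auto simp: hd_conv_nth)
  next
    case (Suc i')
    then show ?thesis using Cons cs by auto
  qed
qed

lemma ann_append: "length cu = length u \<Longrightarrow> cv \<noteq> [] \<Longrightarrow>
   ann (u @ v) (cu @ cv) = ann u (cu @ [hd cv]) @ ann v cv"
proof (induction u arbitrary: cu)
  case Nil then show ?case by simp
next
  case (Cons x u)
  then obtain c cu' where "cu = c # cu'" by (cases cu) auto
  have "hd (cu' @ cv) = hd (cu' @ [hd cv])" using Cons.prems by (cases cu') auto
  then show ?case using Cons.IH[of cu'] Cons.prems \<open>cu = c # cu'\<close> by simp
qed

lemma fst_set_ann: "fst ` set (ann w cs) = set w"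
  by (metis list.set_map map_fst_ann)

lemma good_Un: "(\<And>e e'. e \<in> A \<Longrightarrow> e' \<in> B \<Longrightarrow> fst (fst e) \<noteq> fst (fst e')) \<Longrightarrow>
  good al be (A \<union> B) = (good al be A \<and> good al be B)"
  unfolding good_def by (metis Un_iff fst_conv)

definition CL :: "'a set \<Rightarrow> ('a \<Rightarrow> 'a \<Rightarrow> 'a) \<Rightarrow> ('a \<Rightarrow> 'a \<Rightarrow> 'a) \<Rightarrow> letter list \<Rightarrow> 'a \<Rightarrow> 'a \<Rightarrow> 'a list set" where
  "CL X al be w p q = {cs. set cs \<subseteq> X \<and> length cs = Suc (length w) \<and> good al be (set (ann w cs)) \<and> hd cs = p \<and> last cs = q}"

lemma is_coloring_good:
  "is_coloring al be w c \<longleftrightarrow> good al be (set (ann w (map c [0..<Suc (length w)])))"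
proof -
  let ?cs = "map c [0..<Suc (length w)]"
  have nth: "\<And>i. i < length w \<Longrightarrow> ann w ?cs ! i = (w ! i, c i, c (Suc i))"
    by (subst nth_ann) (auto simp del: upt_Suc)
  have mem: "e \<in> set (ann w ?cs) \<longleftrightarrow> (\<exists>i<length w. e = (w ! i, c i, c (Suc i)))" for e
    by (auto simp: in_set_conv_nth nth simp del: upt_Suc)
  show ?thesis
    unfolding is_coloring_def good_def mem
  proof (intro iffI allI impI)
    fix l s a a' b b'
    assume H: "\<forall>i<length w. \<forall>j<length w. \<forall>l s. w ! i = (l, True, s) \<longrightarrow> w ! j = (l, False, s) \<longrightarrow>
          (if s then c (Suc j) = be (c (Suc i)) (c j) \<and> c i = al (c j) (c (Suc i))
           else c j = be (c i) (c (Suc j)) \<and> c (Suc i) = al (c (Suc j)) (c i))"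
      and "\<exists>i<length w. ((l, True, s), a, a') = (w ! i, c i, c (Suc i))"
      and "\<exists>i<length w. ((l, False, s), b, b') = (w ! i, c i, c (Suc i))"
    then obtain i j where "i < length w" "j < length w" "((l, True, s), a, a') = (w ! i, c i, c (Suc i))"
      "((l, False, s), b, b') = (w ! j, c j, c (Suc j))" by blast
    then have wi: "w ! i = (l, True, s)" and wj: "w ! j = (l, False, s)"
      and abc: "a = c i" "a' = c (Suc i)" "b = c j" "b' = c (Suc j)" by auto
    from H[rule_format, OF \<open>i < length w\<close> \<open>j < length w\<close> wi wj]
    show "cr al be s a a' b b'" unfolding cr_def abc .
  next
    fix i j l s
    assume H: "\<forall>l s a a' b b'. (\<exists>i<length w. ((l, True, s), a, a') = (w ! i, c i, c (Suc i))) \<longrightarrow>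
          (\<exists>i<length w. ((l, False, s), b, b') = (w ! i, c i, c (Suc i))) \<longrightarrow> cr al be s a a' b b'"
      and "i < length w" "j < length w" "w ! i = (l, True, s)" "w ! j = (l, False, s)"
    have e1: "\<exists>i'<length w. ((l, True, s), c i, c (Suc i)) = (w ! i', c i', c (Suc i'))"
      using \<open>i < length w\<close> \<open>w ! i = (l, True, s)\<close> by metis
    have e2: "\<exists>i'<length w. ((l, False, s), c j, c (Suc j)) = (w ! i', c i', c (Suc i'))"
      using \<open>j < length w\<close> \<open>w ! j = (l, False, s)\<close> by metis
    have "cr al be s (c i) (c (Suc i)) (c j) (c (Suc j))" using H e1 e2 by blast
    then show "if s then c (Suc j) = be (c (Suc i)) (c j) \<and> c i = al (c j) (c (Suc i))
           else c j = be (c i) (c (Suc j)) \<and> c (Suc i) = al (c (Suc j)) (c i)" unfolding cr_def by auto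
  qed
qed

lemma card_colorings: "card (colorings X al be w p q) = card (CL X al be w p q)"
proof -
  let ?n = "length w"
  let ?f = "\<lambda>c. map c [0..<Suc ?n]"
  have "bij_betw ?f (colorings X al be w p q) (CL X al be w p q)"
  proof (rule bij_betwI')
    fix c d assume c: "c \<in> colorings X al be w p q" and d: "d \<in> colorings X al be w p q"
    show "(?f c = ?f d) = (c = d)"
    proof
      assume eq: "?f c = ?f d"
      show "c = d"
      proof
        fix k
        show "c k = d k"
        proof (cases "k \<le> ?n")
          case True
          have "?f c ! k = ?f d ! k" by (simp only: eq)
          moreover have "?f c ! k = c k" "?f d ! k = d k" using True by (simp_all add: nth_map del: upt_Suc)
          ultimately show ?thesis by simp
        next
          case False
          then show ?thesis using c d unfolding colorings_def PiE_def extensional_def by auto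
        qed
      qed
    qed simp
  next
    fix c assume c: "c \<in> colorings X al be w p q"
    then show "?f c \<in> CL X al be w p q"
      unfolding colorings_def CL_def
      by (auto simp: is_coloring_good hd_map last_map simp del: upt_Suc)
  next
    fix cs assume cs: "cs \<in> CL X al be w p q"
    let ?c = "restrict (\<lambda>k. cs ! k) {0..?n}"
    have len: "length cs = Suc ?n" using cs by (simp add: CL_def)
    have fc: "?f ?c = cs"
      by (rule nth_equalityI) (auto simp: len simp del: upt_Suc)
    have "?c \<in> colorings X al be w p q"
      unfolding colorings_def
    proof (intro CollectI conjI)
      show "?c \<in> {0..?n} \<rightarrow>\<^sub>E X" using cs len by (auto simp: CL_def)
      show "is_coloring al be w ?c" unfolding is_coloring_good fc using cs by (simp add: CL_def)
      show "?c 0 = p" using cs len by (cases cs) (auto simp: CL_def)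
      have "last cs = cs ! (length cs - 1)" using len by (intro last_conv_nth) auto
      then show "?c ?n = q" using cs len by (auto simp: CL_def)
    qed
    then show "\<exists>c\<in>colorings X al be w p q. cs = ?f c" using fc by metis
  qed
  then show ?thesis by (rule bij_betw_same_card)
qed

locale bq =
  fixes X :: "'a set" and al be :: "'a \<Rightarrow> 'a \<Rightarrow> 'a"
  assumes fin: "finite X" and B: "biquandle X al be"
begin

lemma Bparts:
  "\<forall>b\<in>X. bij_betw (al b) X X \<and> bij_betw (be b) X X"
  "\<forall>a\<in>X. al a a = be a a"
  "bij_betw (\<lambda>(a, b). (al a b, be b a)) (X \<times> X) (X \<times> X)"
  "\<forall>a\<in>X. \<forall>b\<in>X. \<forall>x\<in>X.
        al (al a b) (al a x) = al (be b a) (al b x)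
      \<and> be (al a b) (al a x) = al (be b a) (be b x)
      \<and> be (be a b) (be a x) = be (al b a) (be b x)"
  using B unfolding biquandle_def
  by (rule conjunct1, rule conjunct1[OF conjunct2], rule conjunct1[OF conjunct2[OF conjunct2]],
      rule conjunct2[OF conjunct2[OF conjunct2]])

lemma bij_al: "b \<in> X \<Longrightarrow> bij_betw (al b) X X" using Bparts(1) by blast
lemma bij_be: "b \<in> X \<Longrightarrow> bij_betw (be b) X X" using Bparts(1) by blast

lemma alX: "a \<in> X \<Longrightarrow> b \<in> X \<Longrightarrow> al a b \<in> X"
  using bij_al[of a] unfolding bij_betw_def by blast
lemma beX: "a \<in> X \<Longrightarrow> b \<in> X \<Longrightarrow> be a b \<in> X"
  using bij_be[of a] unfolding bij_betw_def by blast
lemma al_inj: "a \<in> X \<Longrightarrow> x \<in> X \<Longrightarrow> y \<in> X \<Longrightarrow> al a x = al a y \<Longrightarrow> x = y"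
  using bij_al[of a] unfolding bij_betw_def inj_on_def by blast
lemma be_inj: "a \<in> X \<Longrightarrow> x \<in> X \<Longrightarrow> y \<in> X \<Longrightarrow> be a x = be a y \<Longrightarrow> x = y"
  using bij_be[of a] unfolding bij_betw_def inj_on_def by blast
lemma al_surj: "a \<in> X \<Longrightarrow> y \<in> X \<Longrightarrow> \<exists>x\<in>X. al a x = y"
  using bij_al[of a] unfolding bij_betw_def by (metis imageE)
lemma be_surj: "a \<in> X \<Longrightarrow> y \<in> X \<Longrightarrow> \<exists>x\<in>X. be a x = y"
  using bij_be[of a] unfolding bij_betw_def by (metis imageE)
lemma diag: "a \<in> X \<Longrightarrow> al a a = be a a"
  using Bparts(2) by blast
lemma S_inj: "a \<in> X \<Longrightarrow> b \<in> X \<Longrightarrow> a' \<in> X \<Longrightarrow> b' \<in> X \<Longrightarrow> al a b = al a' b' \<Longrightarrow> be b a = be b' a'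
   \<Longrightarrow> a = a' \<and> b = b'"
proof -
  assume h: "a \<in> X" "b \<in> X" "a' \<in> X" "b' \<in> X" "al a b = al a' b'" "be b a = be b' a'"
  have i: "inj_on (\<lambda>(a, b). (al a b, be b a)) (X \<times> X)"
    using Bparts(3) unfolding bij_betw_def by blast
  have "(a, b) = (a', b')" by (rule inj_onD[OF i]) (use h in auto)
  then show ?thesis by simp
qed
lemma S_surj: "p \<in> X \<Longrightarrow> r \<in> X \<Longrightarrow> \<exists>a\<in>X. \<exists>b\<in>X. al a b = p \<and> be b a = r"
proof -
  assume h: "p \<in> X" "r \<in> X"
  have "(\<lambda>(a, b). (al a b, be b a)) ` (X \<times> X) = X \<times> X"
    using Bparts(3) unfolding bij_betw_def by blast
  then have "(p, r) \<in> (\<lambda>(a, b). (al a b, be b a)) ` (X \<times> X)" using h by simp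
  then show ?thesis by auto
qed
lemma ax1: "a \<in> X \<Longrightarrow> b \<in> X \<Longrightarrow> x \<in> X \<Longrightarrow> al (al a b) (al a x) = al (be b a) (al b x)"
  using Bparts(4) by blast
lemma ax2: "a \<in> X \<Longrightarrow> b \<in> X \<Longrightarrow> x \<in> X \<Longrightarrow> be (al a b) (al a x) = al (be b a) (be b x)"
  using Bparts(4) by blast
lemma ax3: "a \<in> X \<Longrightarrow> b \<in> X \<Longrightarrow> x \<in> X \<Longrightarrow> be (be a b) (be a x) = be (al b a) (be b x)"
  using Bparts(4) by blast

lemma diag_inj: "a \<in> X \<Longrightarrow> b \<in> X \<Longrightarrow> al a a = al b b \<Longrightarrow> a = b"
  using S_inj[of a a b b] diag[of a] diag[of b] by simp

lemma diag_surj: "t \<in> X \<Longrightarrow> \<exists>d\<in>X. al d d = t"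
proof -
  assume t: "t \<in> X"
  have sub: "(\<lambda>d. al d d) ` X \<subseteq> X" using alX by blast
  have inj: "inj_on (\<lambda>d. al d d) X" unfolding inj_on_def using diag_inj by blast
  have "(\<lambda>d. al d d) ` X = X" using endo_inj_surj[OF fin sub inj] .
  then have "t \<in> (\<lambda>d. al d d) ` X" using t by simp
  then show ?thesis by blast
qed

lemma diag_S: "a \<in> X \<Longrightarrow> b \<in> X \<Longrightarrow> d \<in> X \<Longrightarrow> al a b = d \<Longrightarrow> be b a = d \<Longrightarrow> a = b"
proof -
  assume h: "a \<in> X" "b \<in> X" "d \<in> X" "al a b = d" "be b a = d"
  obtain e where e: "e \<in> X" "al e e = d" using diag_surj h(3) by blast
  have "be e e = d" using e diag[of e] by simp
  then have "a = e \<and> b = e" using S_inj[of a b e e] h e by simp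
  then show ?thesis by simp
qed

end

lemma good_R1: "good al be (set (ann [(l, ov, s), (l, \<not> ov, s)] [a, d, b])) =
   (if ov then cr al be s a d d b else cr al be s d b a d)"
  unfolding good_def by (cases ov) auto

lemma good_R2_same: "x \<noteq> y \<Longrightarrow>
  good al be (set (ann [(x, ov, s), (y, ov, \<not> s)] [p, d1, p']) \<union> set (ann [(x, \<not> ov, s), (y, \<not> ov, \<not> s)] [r, d2, r'])) =
   ((if ov then cr al be s p d1 r d2 else cr al be s r d2 p d1) \<and>
    (if ov then cr al be (\<not> s) d1 p' d2 r' else cr al be (\<not> s) d2 r' d1 p'))"
  unfolding good_def by (cases ov) auto

lemma good_R2_opp: "x \<noteq> y \<Longrightarrow>
  good al be (set (ann [(x, ov, s), (y, ov, \<not> s)] [p, d1, p']) \<union> set (ann [(y, \<not> ov, \<not> s), (x, \<not> ov, s)] [r, d2, r'])) =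
   ((if ov then cr al be s p d1 d2 r' else cr al be s d2 r' p d1) \<and>
    (if ov then cr al be (\<not> s) d1 p' r d2 else cr al be (\<not> s) r d2 d1 p'))"
  unfolding good_def by (cases ov) auto

lemma cr_T: "cr al be True oi oo ui uo = (uo = be oo ui \<and> oi = al ui oo)" by (simp add: cr_def)
lemma cr_F: "cr al be False oi oo ui uo = (ui = be oi uo \<and> oo = al uo oi)" by (simp add: cr_def)

context bq begin

lemma r1_eq:
  assumes X: "a \<in> X" "d \<in> X" "b \<in> X" and g: "good al be (set (ann [(l, ov, s), (l, \<not> ov, s)] [a, d, b]))"
  shows "a = b"
proof -
  have c: "if ov then cr al be s a d d b else cr al be s d b a d" using g by (simp only: good_R1)
  show ?thesis
  proof (cases ov; cases s)
    assume "ov" "s" then have "cr al be True a d d b" using c by simp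
    then have "b = be d d" "a = al d d" by (simp_all only: cr_T)
    then show ?thesis using diag[OF X(2)] by simp
  next
    assume "ov" "\<not> s" then have "cr al be False a d d b" using c by simp
    then have hh: "d = be a b \<and> d = al b a" unfolding cr_F .
    then show ?thesis using diag_S[OF X(3) X(1) X(2)] by metis
  next
    assume "\<not> ov" "s" then have "cr al be True d b a d" using c by simp
    then have hh: "d = be b a \<and> d = al a b" unfolding cr_T .
    then show ?thesis using diag_S[OF X(1) X(3) X(2)] by metis
  next
    assume "\<not> ov" "\<not> s" then have "cr al be False d b a d" using c by simp
    then have "a = be d d" "b = al d d" by (simp_all only: cr_F)
    then show ?thesis using diag[OF X(2)] by simp
  qed
qed

lemma r1_ex:
  assumes a: "a \<in> X"
  shows "\<exists>d\<in>X. good al be (set (ann [(l, ov, s), (l, \<not> ov, s)] [a, d, a]))"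
proof -
  obtain e where e: "e \<in> X" "al e e = a" using diag_surj a by blast
  have e2: "be e e = a" using e diag[of e] by simp
  have a2: "be a a = al a a" using diag[OF a] by simp
  have aX: "al a a \<in> X" using alX[OF a a] .
  show ?thesis
  proof (cases ov; cases s)
    assume "ov" "s" then have "good al be (set (ann [(l, ov, s), (l, \<not> ov, s)] [a, e, a]))"
      unfolding good_R1 using e e2 by (simp add: cr_def)
    then show ?thesis using e by blast
  next
    assume "ov" "\<not> s" then have "good al be (set (ann [(l, ov, s), (l, \<not> ov, s)] [a, al a a, a]))"
      unfolding good_R1 using a2 by (simp add: cr_def)
    then show ?thesis using aX by blast
  next
    assume "\<not> ov" "s" then have "good al be (set (ann [(l, ov, s), (l, \<not> ov, s)] [a, al a a, a]))"
      unfolding good_R1 using a2 by (simp add: cr_def)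
    then show ?thesis using aX by blast
  next
    assume "\<not> ov" "\<not> s" then have "good al be (set (ann [(l, ov, s), (l, \<not> ov, s)] [a, e, a]))"
      unfolding good_R1 using e e2 by (simp add: cr_def)
    then show ?thesis using e by blast
  qed
qed

lemma r1_uniq:
  assumes X: "a \<in> X" "d \<in> X" "b \<in> X" "d' \<in> X"
    and g: "good al be (set (ann [(l, ov, s), (l, \<not> ov, s)] [a, d, b]))"
    and g': "good al be (set (ann [(l, ov, s), (l, \<not> ov, s)] [a, d', b]))"
  shows "d = d'"
proof -
  have c: "if ov then cr al be s a d d b else cr al be s d b a d" using g by (simp only: good_R1)
  have c': "if ov then cr al be s a d' d' b else cr al be s d' b a d'" using g' by (simp only: good_R1)
  show ?thesis
  proof (cases ov; cases s)
    assume "ov" "s" then have "cr al be True a d d b" "cr al be True a d' d' b" using c c' by simp_all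
    then have "a = al d d" "a = al d' d'" by (simp_all only: cr_T)
    then show ?thesis using diag_inj[OF X(2) X(4)] by simp
  next
    assume "ov" "\<not> s" then have "cr al be False a d d b" "cr al be False a d' d' b" using c c' by simp_all
    then have "d = be a b" "d' = be a b" by (simp_all only: cr_F)
    then show ?thesis by simp
  next
    assume "\<not> ov" "s" then have "cr al be True d b a d" "cr al be True d' b a d'" using c c' by simp_all
    then have "d = be b a" "d' = be b a" by (simp_all only: cr_T)
    then show ?thesis by simp
  next
    assume "\<not> ov" "\<not> s" then have "cr al be False d b a d" "cr al be False d' b a d'" using c c' by simp_all
    then have "b = al d d" "b = al d' d'" by (simp_all only: cr_F)
    then show ?thesis using diag_inj[OF X(2) X(4)] by simp
  qed
qed

definition R2s :: "bool \<Rightarrow> bool \<Rightarrow> 'a \<Rightarrow> 'a \<Rightarrow> 'a \<Rightarrow> 'a \<Rightarrow> 'a \<Rightarrow> 'a \<Rightarrow> bool" where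
  "R2s ov s p d1 p' r d2 r' = ((if ov then cr al be s p d1 r d2 else cr al be s r d2 p d1) \<and>
    (if ov then cr al be (\<not> s) d1 p' d2 r' else cr al be (\<not> s) d2 r' d1 p'))"

definition R2o :: "bool \<Rightarrow> bool \<Rightarrow> 'a \<Rightarrow> 'a \<Rightarrow> 'a \<Rightarrow> 'a \<Rightarrow> 'a \<Rightarrow> 'a \<Rightarrow> bool" where
  "R2o ov s p d1 p' r d2 r' = ((if ov then cr al be s p d1 d2 r' else cr al be s d2 r' p d1) \<and>
    (if ov then cr al be (\<not> s) d1 p' r d2 else cr al be (\<not> s) r d2 d1 p'))"

lemma R2s_11: "R2s True True p d1 p' r d2 r' = (d2 = be d1 r \<and> p = al r d1 \<and> d2 = be d1 r' \<and> p' = al r' d1)"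
  unfolding R2s_def cr_def by auto

lemma R2s_10: "R2s True False p d1 p' r d2 r' = (r = be p d2 \<and> d1 = al d2 p \<and> r' = be p' d2 \<and> d1 = al d2 p')"
  unfolding R2s_def cr_def by auto

lemma R2s_01: "R2s False True p d1 p' r d2 r' = (d1 = be d2 p \<and> r = al p d2 \<and> d1 = be d2 p' \<and> r' = al p' d2)"
  unfolding R2s_def cr_def by auto

lemma R2s_00: "R2s False False p d1 p' r d2 r' = (p = be r d1 \<and> d2 = al d1 r \<and> p' = be r' d1 \<and> d2 = al d1 r')"
  unfolding R2s_def cr_def by auto

lemma R2s_eq:
  assumes X: "p \<in> X" "d1 \<in> X" "p' \<in> X" "r \<in> X" "d2 \<in> X" "r' \<in> X" and h: "R2s ov s p d1 p' r d2 r'"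
  shows "p = p' \<and> r = r'"
proof (cases ov; cases s)
  assume "ov" "s"
  then have "R2s True True p d1 p' r d2 r'" using h by simp
  then have E: "d2 = be d1 r \<and> p = al r d1 \<and> d2 = be d1 r' \<and> p' = al r' d1" unfolding R2s_11 .
  show ?thesis using E be_inj[of d1 r r'] X by metis
next
  assume "ov" "\<not> s"
  then have "R2s True False p d1 p' r d2 r'" using h by simp
  then have E: "r = be p d2 \<and> d1 = al d2 p \<and> r' = be p' d2 \<and> d1 = al d2 p'" unfolding R2s_10 .
  show ?thesis using E al_inj[of d2 p p'] X by metis
next
  assume "\<not> ov" "s"
  then have "R2s False True p d1 p' r d2 r'" using h by simp
  then have E: "d1 = be d2 p \<and> r = al p d2 \<and> d1 = be d2 p' \<and> r' = al p' d2" unfolding R2s_01 .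
  show ?thesis using E be_inj[of d2 p p'] X by metis
next
  assume "\<not> ov" "\<not> s"
  then have "R2s False False p d1 p' r d2 r'" using h by simp
  then have E: "p = be r d1 \<and> d2 = al d1 r \<and> p' = be r' d1 \<and> d2 = al d1 r'" unfolding R2s_00 .
  show ?thesis using E al_inj[of d1 r r'] X by metis
qed

lemma R2s_ex:
  assumes X: "p \<in> X" "r \<in> X"
  shows "\<exists>d1\<in>X. \<exists>d2\<in>X. R2s ov s p d1 p r d2 r"
proof (cases ov; cases s)
  assume "ov" "s"
  obtain d1 where w: "d1 \<in> X" "al r d1 = p" using al_surj X by blast
  have "R2s ov s p (d1) p r (be d1 r) r" using \<open>ov\<close> \<open>s\<close> w by (simp add: R2s_11)
  moreover have "(d1) \<in> X" "(be d1 r) \<in> X" using w X alX beX by auto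
  ultimately show ?thesis by blast
next
  assume "ov" "\<not> s"
  obtain d2 where w: "d2 \<in> X" "be p d2 = r" using be_surj X by blast
  have "R2s ov s p (al d2 p) p r (d2) r" using \<open>ov\<close> \<open>\<not> s\<close> w by (simp add: R2s_10)
  moreover have "(al d2 p) \<in> X" "(d2) \<in> X" using w X alX beX by auto
  ultimately show ?thesis by blast
next
  assume "\<not> ov" "s"
  obtain d2 where w: "d2 \<in> X" "al p d2 = r" using al_surj X by blast
  have "R2s ov s p (be d2 p) p r (d2) r" using \<open>\<not> ov\<close> \<open>s\<close> w by (simp add: R2s_01)
  moreover have "(be d2 p) \<in> X" "(d2) \<in> X" using w X alX beX by auto
  ultimately show ?thesis by blast
next
  assume "\<not> ov" "\<not> s"
  obtain d1 where w: "d1 \<in> X" "be r d1 = p" using be_surj X by blast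
  have "R2s ov s p (d1) p r (al d1 r) r" using \<open>\<not> ov\<close> \<open>\<not> s\<close> w by (simp add: R2s_00)
  moreover have "(d1) \<in> X" "(al d1 r) \<in> X" using w X alX beX by auto
  ultimately show ?thesis by blast
qed

lemma R2s_uniq:
  assumes X: "p \<in> X" "r \<in> X" "d1 \<in> X" "d2 \<in> X" "e1 \<in> X" "e2 \<in> X"
    and h: "R2s ov s p d1 p r d2 r" and h': "R2s ov s p e1 p r e2 r"
  shows "d1 = e1 \<and> d2 = e2"
proof (cases ov; cases s)
  assume "ov" "s"
  then have "R2s True True p d1 p r d2 r" "R2s True True p e1 p r e2 r" using h h' by simp_all
  then have E: "d2 = be d1 r \<and> p = al r d1 \<and> d2 = be d1 r \<and> p = al r d1" and E': "e2 = be e1 r \<and> p = al r e1 \<and> e2 = be e1 r \<and> p = al r e1" unfolding R2s_11 .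
  show ?thesis using E E' al_inj[of r d1 e1] X by metis
next
  assume "ov" "\<not> s"
  then have "R2s True False p d1 p r d2 r" "R2s True False p e1 p r e2 r" using h h' by simp_all
  then have E: "r = be p d2 \<and> d1 = al d2 p \<and> r = be p d2 \<and> d1 = al d2 p" and E': "r = be p e2 \<and> e1 = al e2 p \<and> r = be p e2 \<and> e1 = al e2 p" unfolding R2s_10 .
  show ?thesis using E E' be_inj[of p d2 e2] X by metis
next
  assume "\<not> ov" "s"
  then have "R2s False True p d1 p r d2 r" "R2s False True p e1 p r e2 r" using h h' by simp_all
  then have E: "d1 = be d2 p \<and> r = al p d2 \<and> d1 = be d2 p \<and> r = al p d2" and E': "e1 = be e2 p \<and> r = al p e2 \<and> e1 = be e2 p \<and> r = al p e2" unfolding R2s_01 .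
  show ?thesis using E E' al_inj[of p d2 e2] X by metis
next
  assume "\<not> ov" "\<not> s"
  then have "R2s False False p d1 p r d2 r" "R2s False False p e1 p r e2 r" using h h' by simp_all
  then have E: "p = be r d1 \<and> d2 = al d1 r \<and> p = be r d1 \<and> d2 = al d1 r" and E': "p = be r e1 \<and> e2 = al e1 r \<and> p = be r e1 \<and> e2 = al e1 r" unfolding R2s_00 .
  show ?thesis using E E' be_inj[of r d1 e1] X by metis
qed

lemma R2o_11: "R2o True True p d1 p' r d2 r' = (r' = be d1 d2 \<and> p = al d2 d1 \<and> r = be d1 d2 \<and> p' = al d2 d1)"
  unfolding R2o_def cr_def by auto

lemma R2o_10: "R2o True False p d1 p' r d2 r' = (d2 = be p r' \<and> d1 = al r' p \<and> d2 = be p' r \<and> d1 = al r p')"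
  unfolding R2o_def cr_def by auto

lemma R2o_01: "R2o False True p d1 p' r d2 r' = (d1 = be r' p \<and> d2 = al p r' \<and> d1 = be r p' \<and> d2 = al p' r)"
  unfolding R2o_def cr_def by auto

lemma R2o_00: "R2o False False p d1 p' r d2 r' = (p = be d2 d1 \<and> r' = al d1 d2 \<and> p' = be d2 d1 \<and> r = al d1 d2)"
  unfolding R2o_def cr_def by auto

lemma R2o_eq:
  assumes X: "p \<in> X" "d1 \<in> X" "p' \<in> X" "r \<in> X" "d2 \<in> X" "r' \<in> X" and h: "R2o ov s p d1 p' r d2 r'"
  shows "p = p' \<and> r = r'"
proof (cases ov; cases s)
  assume "ov" "s"
  then have "R2o True True p d1 p' r d2 r'" using h by simp
  then have E: "r' = be d1 d2 \<and> p = al d2 d1 \<and> r = be d1 d2 \<and> p' = al d2 d1" unfolding R2o_11 .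
  show ?thesis using E by metis
next
  assume "ov" "\<not> s"
  then have "R2o True False p d1 p' r d2 r'" using h by simp
  then have E: "d2 = be p r' \<and> d1 = al r' p \<and> d2 = be p' r \<and> d1 = al r p'" unfolding R2o_10 .
  show ?thesis using E S_inj[of r' p r p'] X by metis
next
  assume "\<not> ov" "s"
  then have "R2o False True p d1 p' r d2 r'" using h by simp
  then have E: "d1 = be r' p \<and> d2 = al p r' \<and> d1 = be r p' \<and> d2 = al p' r" unfolding R2o_01 .
  show ?thesis using E S_inj[of p r' p' r] X by metis
next
  assume "\<not> ov" "\<not> s"
  then have "R2o False False p d1 p' r d2 r'" using h by simp
  then have E: "p = be d2 d1 \<and> r' = al d1 d2 \<and> p' = be d2 d1 \<and> r = al d1 d2" unfolding R2o_00 .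
  show ?thesis using E by metis
qed

lemma R2o_ex:
  assumes X: "p \<in> X" "r \<in> X"
  shows "\<exists>d1\<in>X. \<exists>d2\<in>X. R2o ov s p d1 p r d2 r"
proof (cases ov; cases s)
  assume "ov" "s"
  obtain d2 d1 where w: "d2 \<in> X" "d1 \<in> X" "al d2 d1 = p" "be d1 d2 = r" using S_surj X by blast
  have "R2o ov s p (d1) p r (d2) r" using \<open>ov\<close> \<open>s\<close> w by (simp add: R2o_11)
  moreover have "(d1) \<in> X" "(d2) \<in> X" using w X alX beX by auto
  ultimately show ?thesis by blast
next
  assume "ov" "\<not> s"
  
  have "R2o ov s p (al r p) p r (be p r) r" using \<open>ov\<close> \<open>\<not> s\<close>  by (simp add: R2o_10)
  moreover have "(al r p) \<in> X" "(be p r) \<in> X" using  X alX beX by auto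
  ultimately show ?thesis by blast
next
  assume "\<not> ov" "s"
  
  have "R2o ov s p (be r p) p r (al p r) r" using \<open>\<not> ov\<close> \<open>s\<close>  by (simp add: R2o_01)
  moreover have "(be r p) \<in> X" "(al p r) \<in> X" using  X alX beX by auto
  ultimately show ?thesis by blast
next
  assume "\<not> ov" "\<not> s"
  obtain d1 d2 where w: "d1 \<in> X" "d2 \<in> X" "al d1 d2 = r" "be d2 d1 = p" using S_surj X by blast
  have "R2o ov s p (d1) p r (d2) r" using \<open>\<not> ov\<close> \<open>\<not> s\<close> w by (simp add: R2o_00)
  moreover have "(d1) \<in> X" "(d2) \<in> X" using w X alX beX by auto
  ultimately show ?thesis by blast
qed

lemma R2o_uniq:
  assumes X: "p \<in> X" "r \<in> X" "d1 \<in> X" "d2 \<in> X" "e1 \<in> X" "e2 \<in> X"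
    and h: "R2o ov s p d1 p r d2 r" and h': "R2o ov s p e1 p r e2 r"
  shows "d1 = e1 \<and> d2 = e2"
proof (cases ov; cases s)
  assume "ov" "s"
  then have "R2o True True p d1 p r d2 r" "R2o True True p e1 p r e2 r" using h h' by simp_all
  then have E: "r = be d1 d2 \<and> p = al d2 d1 \<and> r = be d1 d2 \<and> p = al d2 d1" and E': "r = be e1 e2 \<and> p = al e2 e1 \<and> r = be e1 e2 \<and> p = al e2 e1" unfolding R2o_11 .
  show ?thesis using E E' S_inj[of d2 d1 e2 e1] X by metis
next
  assume "ov" "\<not> s"
  then have "R2o True False p d1 p r d2 r" "R2o True False p e1 p r e2 r" using h h' by simp_all
  then have E: "d2 = be p r \<and> d1 = al r p \<and> d2 = be p r \<and> d1 = al r p" and E': "e2 = be p r \<and> e1 = al r p \<and> e2 = be p r \<and> e1 = al r p" unfolding R2o_10 .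
  show ?thesis using E E' by metis
next
  assume "\<not> ov" "s"
  then have "R2o False True p d1 p r d2 r" "R2o False True p e1 p r e2 r" using h h' by simp_all
  then have E: "d1 = be r p \<and> d2 = al p r \<and> d1 = be r p \<and> d2 = al p r" and E': "e1 = be r p \<and> e2 = al p r \<and> e1 = be r p \<and> e2 = al p r" unfolding R2o_01 .
  show ?thesis using E E' by metis
next
  assume "\<not> ov" "\<not> s"
  then have "R2o False False p d1 p r d2 r" "R2o False False p e1 p r e2 r" using h h' by simp_all
  then have E: "p = be d2 d1 \<and> r = al d1 d2 \<and> p = be d2 d1 \<and> r = al d1 d2" and E': "p = be e2 e1 \<and> r = al e1 e2 \<and> p = be e2 e1 \<and> r = al e1 e2" unfolding R2o_00 .
  show ?thesis using E E' S_inj[of d1 d2 e1 e2] X by metis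
qed

end

lemma cr_neg: "cr al be (\<not> s) a b c d = cr al be s b a d c"
  by (cases s) (auto simp: cr_def)

context bq begin

definition R3sys where
 "R3sys sx sy sz oT oM oB t0 t1 t2 m0 m1 m2 b0 b1 b2 =
   (cr al be sx (if oT then t0 else t1) (if oT then t1 else t2) (if oM then m0 else m1) (if oM then m1 else m2) \<and>
    cr al be sy (if oT then t1 else t0) (if oT then t2 else t1) (if oB then b0 else b1) (if oB then b1 else b2) \<and>
    cr al be sz (if oM then m1 else m0) (if oM then m2 else m1) (if oB then b1 else b0) (if oB then b2 else b1))"

lemma R3sys_rev: "R3sys (\<not> sx) (\<not> sy) (\<not> sz) oT oM oB t0 t1 t2 m0 m1 m2 b0 b1 b2 =
   R3sys sx sy sz (\<not> oT) (\<not> oM) (\<not> oB) t2 t1 t0 m2 m1 m0 b2 b1 b0"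
  unfolding R3sys_def cr_neg by (cases oT; cases oM; cases oB) simp_all

lemma BA:
  assumes X: "t0 \<in> X" "t2 \<in> X" "m0 \<in> X" "m2 \<in> X" "b0 \<in> X" "b2 \<in> X" "t1 \<in> X" "m1 \<in> X" "b1 \<in> X"
    and e: "m2 = be t2 m1" "t1 = al m1 t2" "b2 = be t1 b1" "t0 = al b1 t1" "b1 = be m1 b0" "m0 = al b0 m1"
  shows "\<exists>T\<in>X. \<exists>M\<in>X. \<exists>Bb\<in>X. M = be T m0 \<and> t0 = al m0 T \<and> Bb = be t2 b0 \<and> T = al b0 t2 \<and> b2 = be m2 Bb \<and> M = al Bb m2"
proof -
  define T where "T = al b0 t2"
  define Bb where "Bb = be t2 b0"
  define M where "M = al Bb m2"
  have 1: "M = be T m0"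
    using ax2[of b0 t2 m1] X e unfolding T_def M_def Bb_def by simp
  have 2: "t0 = al m0 T"
    using ax1[of b0 m1 t2] X e unfolding T_def by simp
  have 3: "b2 = be m2 Bb"
    using ax3[of t2 m1 b0] X e unfolding Bb_def by simp
  have "T \<in> X" "Bb \<in> X" "M \<in> X" unfolding T_def Bb_def M_def using X alX beX by auto
  then show ?thesis using 1 2 3 T_def Bb_def M_def by blast
qed

lemma AB:
  assumes X: "t0 \<in> X" "t2 \<in> X" "m0 \<in> X" "m2 \<in> X" "b0 \<in> X" "b2 \<in> X" "t1 \<in> X" "m1 \<in> X" "b1 \<in> X"
    and e: "m1 = be t1 m0" "t0 = al m0 t1" "b1 = be t2 b0" "t1 = al b0 t2" "b2 = be m2 b1" "m1 = al b1 m2"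
  shows "\<exists>T\<in>X. \<exists>M\<in>X. \<exists>Bb\<in>X. m2 = be t2 M \<and> T = al M t2 \<and> b2 = be T Bb \<and> t0 = al Bb T \<and> Bb = be M b0 \<and> m0 = al b0 M"
proof -
  obtain M where M: "M \<in> X" "be t2 M = m2" using be_surj X by blast
  define T where "T = al M t2"
  define Bb where "Bb = be M b0"
  have "be t1 (al b0 M) = be t1 m0"
    using ax2[of b0 t2 M] X e M by simp
  then have 1: "m0 = al b0 M" using be_inj[of t1 "al b0 M" m0] X M alX by simp
  have 2: "t0 = al Bb T"
    using ax1[of b0 M t2] X e M 1 unfolding T_def Bb_def by simp
  have 3: "b2 = be T Bb"
    using ax3[of t2 M b0] X e M unfolding T_def Bb_def by simp
  have "T \<in> X" "Bb \<in> X" unfolding T_def Bb_def using X M alX beX by auto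
  then show ?thesis using 1 2 3 T_def Bb_def M by blast
qed

lemma DC:
  assumes X: "t0 \<in> X" "t2 \<in> X" "m0 \<in> X" "m2 \<in> X" "b0 \<in> X" "b2 \<in> X" "t1 \<in> X" "m1 \<in> X" "b1 \<in> X"
    and e: "m2 = be t1 m1" "t0 = al m1 t1" "b2 = be t2 b1" "t1 = al b1 t2" "b0 = be m0 b1" "m1 = al b1 m0"
  shows "\<exists>T\<in>X. \<exists>M\<in>X. \<exists>Bb\<in>X. M = be t2 m0 \<and> T = al m0 t2 \<and> Bb = be T b0 \<and> t0 = al b0 T \<and> Bb = be M b2 \<and> m2 = al b2 M"
proof -
  define T where "T = al m0 t2"
  define M where "M = be t2 m0"
  define Bb where "Bb = be T b0"
  have 1: "t0 = al b0 T"
    using ax1[of b1 m0 t2] X e unfolding T_def by simp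
  have 2: "Bb = be M b2"
    using ax3[of t2 m0 b1] X e unfolding T_def M_def Bb_def by simp
  have 3: "m2 = al b2 M"
    using ax2[of b1 t2 m0] X e unfolding M_def by simp
  have "T \<in> X" "M \<in> X" "Bb \<in> X" unfolding T_def Bb_def M_def using X alX beX by auto
  then show ?thesis using 1 2 3 T_def Bb_def M_def by blast
qed

lemma CD:
  assumes X: "t0 \<in> X" "t2 \<in> X" "m0 \<in> X" "m2 \<in> X" "b0 \<in> X" "b2 \<in> X" "t1 \<in> X" "m1 \<in> X" "b1 \<in> X"
    and e: "m1 = be t2 m0" "t1 = al m0 t2" "b1 = be t1 b0" "t0 = al b0 t1" "b1 = be m1 b2" "m2 = al b2 m1"
  shows "\<exists>T\<in>X. \<exists>M\<in>X. \<exists>Bb\<in>X. m2 = be T M \<and> t0 = al M T \<and> b2 = be t2 Bb \<and> T = al Bb t2 \<and> b0 = be m0 Bb \<and> M = al Bb m0"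
proof -
  obtain Bb where Bb: "Bb \<in> X" "be m0 Bb = b0" using be_surj X by blast
  define T where "T = al Bb t2"
  define M where "M = al Bb m0"
  have "be m1 (be t2 Bb) = be m1 b2"
    using ax3[of t2 m0 Bb] X e Bb by simp
  then have 1: "b2 = be t2 Bb" using be_inj[of m1 "be t2 Bb" b2] X Bb beX by simp
  have 2: "m2 = be T M"
    using ax2[of Bb t2 m0] X e Bb 1 unfolding T_def M_def by simp
  have 3: "t0 = al M T"
    using ax1[of Bb m0 t2] X e Bb unfolding T_def M_def by simp
  have "T \<in> X" "M \<in> X" unfolding T_def M_def using X Bb alX beX by auto
  then show ?thesis using 1 2 3 T_def M_def Bb by blast
qed

lemma EF:
  assumes X: "t0 \<in> X" "t2 \<in> X" "m0 \<in> X" "m2 \<in> X" "b0 \<in> X" "b2 \<in> X" "t1 \<in> X" "m1 \<in> X" "b1 \<in> X"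
    and e: "m2 = be t1 m1" "t0 = al m1 t1" "b0 = be t1 b1" "t2 = al b1 t1" "b2 = be m1 b1" "m0 = al b1 m1"
  shows "\<exists>T\<in>X. \<exists>M\<in>X. \<exists>Bb\<in>X. M = be t2 m0 \<and> T = al m0 t2 \<and> Bb = be t0 b2 \<and> T = al b2 t0 \<and> Bb = be m2 b0 \<and> M = al b0 m2"
proof -
  define T where "T = al m0 t2"
  define M where "M = be t2 m0"
  define Bb where "Bb = be m2 b0"
  have 1: "T = al b2 t0"
    using ax1[of b1 m1 t1] X e unfolding T_def by simp
  have 2: "M = al b0 m2"
    using ax2[of b1 t1 m1] X e unfolding M_def by simp
  have 3: "Bb = be t0 b2"
    using ax3[of t1 m1 b1] X e unfolding Bb_def by simp
  have "T \<in> X" "M \<in> X" "Bb \<in> X" unfolding T_def Bb_def M_def using X alX beX by auto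
  then show ?thesis using 1 2 3 T_def Bb_def M_def by blast
qed

lemma FE:
  assumes X: "t0 \<in> X" "t2 \<in> X" "m0 \<in> X" "m2 \<in> X" "b0 \<in> X" "b2 \<in> X" "t1 \<in> X" "m1 \<in> X" "b1 \<in> X"
    and e: "m1 = be t2 m0" "t1 = al m0 t2" "b1 = be t0 b2" "t1 = al b2 t0" "b1 = be m2 b0" "m1 = al b0 m2"
  shows "\<exists>T\<in>X. \<exists>M\<in>X. \<exists>Bb\<in>X. m2 = be T M \<and> t0 = al M T \<and> b0 = be T Bb \<and> t2 = al Bb T \<and> b2 = be M Bb \<and> m0 = al Bb M"
proof -
  obtain Bb M where BM: "Bb \<in> X" "M \<in> X" "al Bb M = m0" "be M Bb = b2" using S_surj X by blast
  obtain T where T: "T \<in> X" "al M T = t0" using al_surj X BM by blast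
  have "al m0 (al Bb T) = al m0 t2"
    using ax1[of Bb M T] X e BM T by simp
  then have 1: "t2 = al Bb T" using al_inj[of m0 "al Bb T" t2] X BM T alX by simp
  have m1: "m1 = al (be T Bb) (be T M)"
    using ax2[of Bb T M] X e BM T 1 by simp
  have b1: "b1 = be (be T M) (be T Bb)"
    using ax3[of T M Bb] X e BM T by simp
  have "b0 = be T Bb \<and> m2 = be T M"
    using S_inj[of b0 m2 "be T Bb" "be T M"] X BM T beX m1 b1 e by simp
  then show ?thesis using 1 BM T by blast
qed

lemma HG:
  assumes X: "t0 \<in> X" "t2 \<in> X" "m0 \<in> X" "m2 \<in> X" "b0 \<in> X" "b2 \<in> X" "t1 \<in> X" "m1 \<in> X" "b1 \<in> X"
    and e: "m1 = be t1 m0" "t0 = al m0 t1" "b1 = be t1 b2" "t2 = al b2 t1" "b0 = be m1 b1" "m2 = al b1 m1"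
  shows "\<exists>T\<in>X. \<exists>M\<in>X. \<exists>Bb\<in>X. m2 = be t2 M \<and> T = al M t2 \<and> b0 = be t0 Bb \<and> T = al Bb t0 \<and> Bb = be m0 b2 \<and> M = al b2 m0"
proof -
  define M where "M = al b2 m0"
  define Bb where "Bb = be m0 b2"
  define T where "T = al M t2"
  have 1: "m2 = be t2 M"
    using ax2[of b2 t1 m0] X e unfolding M_def by simp
  have 2: "T = al Bb t0"
    using ax1[of b2 m0 t1] X e unfolding T_def M_def Bb_def by simp
  have 3: "b0 = be t0 Bb"
    using ax3[of t1 m0 b2] X e unfolding Bb_def by simp
  have "T \<in> X" "M \<in> X" "Bb \<in> X" unfolding T_def Bb_def M_def using X alX beX by auto
  then show ?thesis using 1 2 3 T_def Bb_def M_def by blast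
qed

lemma GH:
  assumes X: "t0 \<in> X" "t2 \<in> X" "m0 \<in> X" "m2 \<in> X" "b0 \<in> X" "b2 \<in> X" "t1 \<in> X" "m1 \<in> X" "b1 \<in> X"
    and e: "m2 = be t2 m1" "t1 = al m1 t2" "b0 = be t0 b1" "t1 = al b1 t0" "b1 = be m0 b2" "m1 = al b2 m0"
  shows "\<exists>T\<in>X. \<exists>M\<in>X. \<exists>Bb\<in>X. M = be T m0 \<and> t0 = al m0 T \<and> Bb = be T b2 \<and> t2 = al b2 T \<and> b0 = be M Bb \<and> m2 = al Bb M"
proof -
  obtain T where T: "T \<in> X" "al m0 T = t0" using al_surj X by blast
  define M where "M = be T m0"
  define Bb where "Bb = be T b2"
  have "al m1 (al b2 T) = al m1 t2"
    using ax1[of b2 m0 T] X e T by simp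
  then have 1: "t2 = al b2 T" using al_inj[of m1 "al b2 T" t2] X T alX by simp
  have 2: "m2 = al Bb M"
    using ax2[of b2 T m0] X e T 1 unfolding M_def Bb_def by simp
  have 3: "b0 = be M Bb"
    using ax3[of T m0 b2] X e T unfolding M_def Bb_def by simp
  have "M \<in> X" "Bb \<in> X" unfolding Bb_def M_def using X T alX beX by auto
  then show ?thesis using 1 2 3 T M_def Bb_def by blast
qed

lemma R3_AB:
  assumes h: "R3sys True True True True True True t0 t1 t2 m0 m1 m2 b0 b1 b2"
    and X: "t0 \<in> X" "t2 \<in> X" "m0 \<in> X" "m2 \<in> X" "b0 \<in> X" "b2 \<in> X" "t1 \<in> X" "m1 \<in> X" "b1 \<in> X"
  shows "\<exists>T\<in>X. \<exists>M\<in>X. \<exists>Bb\<in>X. R3sys True True True False False False t0 T t2 m0 M m2 b0 Bb b2"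
proof -
  show ?thesis using AB[OF X] h unfolding R3sys_def cr_T cr_F if_True if_False by blast
qed

lemma R3_BA:
  assumes h: "R3sys True True True False False False t0 t1 t2 m0 m1 m2 b0 b1 b2"
    and X: "t0 \<in> X" "t2 \<in> X" "m0 \<in> X" "m2 \<in> X" "b0 \<in> X" "b2 \<in> X" "t1 \<in> X" "m1 \<in> X" "b1 \<in> X"
  shows "\<exists>T\<in>X. \<exists>M\<in>X. \<exists>Bb\<in>X. R3sys True True True True True True t0 T t2 m0 M m2 b0 Bb b2"
proof -
  show ?thesis using BA[OF X] h unfolding R3sys_def cr_T cr_F if_True if_False by blast
qed

lemma R3_CD:
  assumes h: "R3sys True True False False True True t0 t1 t2 m0 m1 m2 b0 b1 b2"
    and X: "t0 \<in> X" "t2 \<in> X" "m0 \<in> X" "m2 \<in> X" "b0 \<in> X" "b2 \<in> X" "t1 \<in> X" "m1 \<in> X" "b1 \<in> X"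
  shows "\<exists>T\<in>X. \<exists>M\<in>X. \<exists>Bb\<in>X. R3sys True True False True False False t0 T t2 m0 M m2 b0 Bb b2"
proof -
  show ?thesis using CD[OF X] h unfolding R3sys_def cr_T cr_F if_True if_False by blast
qed

lemma R3_DC:
  assumes h: "R3sys True True False True False False t0 t1 t2 m0 m1 m2 b0 b1 b2"
    and X: "t0 \<in> X" "t2 \<in> X" "m0 \<in> X" "m2 \<in> X" "b0 \<in> X" "b2 \<in> X" "t1 \<in> X" "m1 \<in> X" "b1 \<in> X"
  shows "\<exists>T\<in>X. \<exists>M\<in>X. \<exists>Bb\<in>X. R3sys True True False False True True t0 T t2 m0 M m2 b0 Bb b2"
proof -
  show ?thesis using DC[OF X] h unfolding R3sys_def cr_T cr_F if_True if_False by blast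
qed

lemma R3_EF:
  assumes h: "R3sys True False True True False True t0 t1 t2 m0 m1 m2 b0 b1 b2"
    and X: "t0 \<in> X" "t2 \<in> X" "m0 \<in> X" "m2 \<in> X" "b0 \<in> X" "b2 \<in> X" "t1 \<in> X" "m1 \<in> X" "b1 \<in> X"
  shows "\<exists>T\<in>X. \<exists>M\<in>X. \<exists>Bb\<in>X. R3sys True False True False True False t0 T t2 m0 M m2 b0 Bb b2"
proof -
  show ?thesis using EF[OF X] h unfolding R3sys_def cr_T cr_F if_True if_False by blast
qed

lemma R3_FE:
  assumes h: "R3sys True False True False True False t0 t1 t2 m0 m1 m2 b0 b1 b2"
    and X: "t0 \<in> X" "t2 \<in> X" "m0 \<in> X" "m2 \<in> X" "b0 \<in> X" "b2 \<in> X" "t1 \<in> X" "m1 \<in> X" "b1 \<in> X"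
  shows "\<exists>T\<in>X. \<exists>M\<in>X. \<exists>Bb\<in>X. R3sys True False True True False True t0 T t2 m0 M m2 b0 Bb b2"
proof -
  show ?thesis using FE[OF X] h unfolding R3sys_def cr_T cr_F if_True if_False by blast
qed

lemma R3_GH:
  assumes h: "R3sys True False False False False True t0 t1 t2 m0 m1 m2 b0 b1 b2"
    and X: "t0 \<in> X" "t2 \<in> X" "m0 \<in> X" "m2 \<in> X" "b0 \<in> X" "b2 \<in> X" "t1 \<in> X" "m1 \<in> X" "b1 \<in> X"
  shows "\<exists>T\<in>X. \<exists>M\<in>X. \<exists>Bb\<in>X. R3sys True False False True True False t0 T t2 m0 M m2 b0 Bb b2"
proof -
  show ?thesis using GH[OF X] h unfolding R3sys_def cr_T cr_F if_True if_False by blast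
qed

lemma R3_HG:
  assumes h: "R3sys True False False True True False t0 t1 t2 m0 m1 m2 b0 b1 b2"
    and X: "t0 \<in> X" "t2 \<in> X" "m0 \<in> X" "m2 \<in> X" "b0 \<in> X" "b2 \<in> X" "t1 \<in> X" "m1 \<in> X" "b1 \<in> X"
  shows "\<exists>T\<in>X. \<exists>M\<in>X. \<exists>Bb\<in>X. R3sys True False False False False True t0 T t2 m0 M m2 b0 Bb b2"
proof -
  show ?thesis using HG[OF X] h unfolding R3sys_def cr_T cr_F if_True if_False by blast
qed


lemma U_A:
  assumes h: "R3sys True True True True True True t0 t1 t2 m0 m1 m2 b0 b1 b2" and h': "R3sys True True True True True True t0 t1' t2 m0 m1' m2 b0 b1' b2"
    and X: "t0 \<in> X" "t2 \<in> X" "m0 \<in> X" "m2 \<in> X" "b0 \<in> X" "b2 \<in> X" "t1 \<in> X" "m1 \<in> X" "b1 \<in> X" "t1' \<in> X" "m1' \<in> X" "b1' \<in> X"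
  shows "t1 = t1' \<and> m1 = m1' \<and> b1 = b1'"
proof -
  have e: "m1 = be t1 m0" "t0 = al m0 t1" "b1 = be t2 b0" "t1 = al b0 t2" "b2 = be m2 b1" "m1 = al b1 m2" using h unfolding R3sys_def cr_T cr_F if_True if_False by blast+
  have e': "m1' = be t1' m0" "t0 = al m0 t1'" "b1' = be t2 b0" "t1' = al b0 t2" "b2 = be m2 b1'" "m1' = al b1' m2" using h' unfolding R3sys_def cr_T cr_F if_True if_False by blast+
  show ?thesis using e(4,3,6) e'(4,3,6) by simp
qed

lemma U_B:
  assumes h: "R3sys True True True False False False t0 t1 t2 m0 m1 m2 b0 b1 b2" and h': "R3sys True True True False False False t0 t1' t2 m0 m1' m2 b0 b1' b2"
    and X: "t0 \<in> X" "t2 \<in> X" "m0 \<in> X" "m2 \<in> X" "b0 \<in> X" "b2 \<in> X" "t1 \<in> X" "m1 \<in> X" "b1 \<in> X" "t1' \<in> X" "m1' \<in> X" "b1' \<in> X"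
  shows "t1 = t1' \<and> m1 = m1' \<and> b1 = b1'"
proof -
  have e: "m2 = be t2 m1" "t1 = al m1 t2" "b2 = be t1 b1" "t0 = al b1 t1" "b1 = be m1 b0" "m0 = al b0 m1" using h unfolding R3sys_def cr_T cr_F if_True if_False by blast+
  have e': "m2 = be t2 m1'" "t1' = al m1' t2" "b2 = be t1' b1'" "t0 = al b1' t1'" "b1' = be m1' b0" "m0 = al b0 m1'" using h' unfolding R3sys_def cr_T cr_F if_True if_False by blast+
  have "be t2 m1 = be t2 m1'" using e(1) e'(1) by simp
  then have m: "m1 = m1'" using be_inj[OF X(2) X(8) X(11)] by blast
  show ?thesis using m e(2,5) e'(2,5) by simp
qed

lemma U_C:
  assumes h: "R3sys True True False False True True t0 t1 t2 m0 m1 m2 b0 b1 b2" and h': "R3sys True True False False True True t0 t1' t2 m0 m1' m2 b0 b1' b2"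
    and X: "t0 \<in> X" "t2 \<in> X" "m0 \<in> X" "m2 \<in> X" "b0 \<in> X" "b2 \<in> X" "t1 \<in> X" "m1 \<in> X" "b1 \<in> X" "t1' \<in> X" "m1' \<in> X" "b1' \<in> X"
  shows "t1 = t1' \<and> m1 = m1' \<and> b1 = b1'"
proof -
  have e: "m1 = be t2 m0" "t1 = al m0 t2" "b1 = be t1 b0" "t0 = al b0 t1" "b1 = be m1 b2" "m2 = al b2 m1" using h unfolding R3sys_def cr_T cr_F if_True if_False by blast+
  have e': "m1' = be t2 m0" "t1' = al m0 t2" "b1' = be t1' b0" "t0 = al b0 t1'" "b1' = be m1' b2" "m2 = al b2 m1'" using h' unfolding R3sys_def cr_T cr_F if_True if_False by blast+
  show ?thesis using e(2,1,3) e'(2,1,3) by simp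
qed

lemma U_D:
  assumes h: "R3sys True True False True False False t0 t1 t2 m0 m1 m2 b0 b1 b2" and h': "R3sys True True False True False False t0 t1' t2 m0 m1' m2 b0 b1' b2"
    and X: "t0 \<in> X" "t2 \<in> X" "m0 \<in> X" "m2 \<in> X" "b0 \<in> X" "b2 \<in> X" "t1 \<in> X" "m1 \<in> X" "b1 \<in> X" "t1' \<in> X" "m1' \<in> X" "b1' \<in> X"
  shows "t1 = t1' \<and> m1 = m1' \<and> b1 = b1'"
proof -
  have e: "m2 = be t1 m1" "t0 = al m1 t1" "b2 = be t2 b1" "t1 = al b1 t2" "b0 = be m0 b1" "m1 = al b1 m0" using h unfolding R3sys_def cr_T cr_F if_True if_False by blast+
  have e': "m2 = be t1' m1'" "t0 = al m1' t1'" "b2 = be t2 b1'" "t1' = al b1' t2" "b0 = be m0 b1'" "m1' = al b1' m0" using h' unfolding R3sys_def cr_T cr_F if_True if_False by blast+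
  have "al m1 t1 = al m1' t1'" "be t1 m1 = be t1' m1'" using e(1,2) e'(1,2) by simp_all
  then have tm: "m1 = m1' \<and> t1 = t1'" using S_inj[OF X(8) X(7) X(11) X(10)] by blast
  have "be m0 b1 = be m0 b1'" using e(5) e'(5) by simp
  then have b: "b1 = b1'" using be_inj[OF X(3) X(9) X(12)] by blast
  show ?thesis using tm b by simp
qed

lemma U_E:
  assumes h: "R3sys True False True True False True t0 t1 t2 m0 m1 m2 b0 b1 b2" and h': "R3sys True False True True False True t0 t1' t2 m0 m1' m2 b0 b1' b2"
    and X: "t0 \<in> X" "t2 \<in> X" "m0 \<in> X" "m2 \<in> X" "b0 \<in> X" "b2 \<in> X" "t1 \<in> X" "m1 \<in> X" "b1 \<in> X" "t1' \<in> X" "m1' \<in> X" "b1' \<in> X"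
  shows "t1 = t1' \<and> m1 = m1' \<and> b1 = b1'"
proof -
  have e: "m2 = be t1 m1" "t0 = al m1 t1" "b0 = be t1 b1" "t2 = al b1 t1" "b2 = be m1 b1" "m0 = al b1 m1" using h unfolding R3sys_def cr_T cr_F if_True if_False by blast+
  have e': "m2 = be t1' m1'" "t0 = al m1' t1'" "b0 = be t1' b1'" "t2 = al b1' t1'" "b2 = be m1' b1'" "m0 = al b1' m1'" using h' unfolding R3sys_def cr_T cr_F if_True if_False by blast+
  have "al m1 t1 = al m1' t1'" "be t1 m1 = be t1' m1'" using e(1,2) e'(1,2) by simp_all
  then have tm: "m1 = m1' \<and> t1 = t1'" using S_inj[OF X(8) X(7) X(11) X(10)] by blast
  have "be t1 b1 = be t1 b1'" using e(3) e'(3) tm by simp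
  then have b: "b1 = b1'" using be_inj[OF X(7) X(9) X(12)] by blast
  show ?thesis using tm b by simp
qed

lemma U_F:
  assumes h: "R3sys True False True False True False t0 t1 t2 m0 m1 m2 b0 b1 b2" and h': "R3sys True False True False True False t0 t1' t2 m0 m1' m2 b0 b1' b2"
    and X: "t0 \<in> X" "t2 \<in> X" "m0 \<in> X" "m2 \<in> X" "b0 \<in> X" "b2 \<in> X" "t1 \<in> X" "m1 \<in> X" "b1 \<in> X" "t1' \<in> X" "m1' \<in> X" "b1' \<in> X"
  shows "t1 = t1' \<and> m1 = m1' \<and> b1 = b1'"
proof -
  have e: "m1 = be t2 m0" "t1 = al m0 t2" "b1 = be t0 b2" "t1 = al b2 t0" "b1 = be m2 b0" "m1 = al b0 m2" using h unfolding R3sys_def cr_T cr_F if_True if_False by blast+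
  have e': "m1' = be t2 m0" "t1' = al m0 t2" "b1' = be t0 b2" "t1' = al b2 t0" "b1' = be m2 b0" "m1' = al b0 m2" using h' unfolding R3sys_def cr_T cr_F if_True if_False by blast+
  show ?thesis using e(2,1,5) e'(2,1,5) by simp
qed

lemma U_G:
  assumes h: "R3sys True False False False False True t0 t1 t2 m0 m1 m2 b0 b1 b2" and h': "R3sys True False False False False True t0 t1' t2 m0 m1' m2 b0 b1' b2"
    and X: "t0 \<in> X" "t2 \<in> X" "m0 \<in> X" "m2 \<in> X" "b0 \<in> X" "b2 \<in> X" "t1 \<in> X" "m1 \<in> X" "b1 \<in> X" "t1' \<in> X" "m1' \<in> X" "b1' \<in> X"
  shows "t1 = t1' \<and> m1 = m1' \<and> b1 = b1'"
proof -
  have e: "m2 = be t2 m1" "t1 = al m1 t2" "b0 = be t0 b1" "t1 = al b1 t0" "b1 = be m0 b2" "m1 = al b2 m0" using h unfolding R3sys_def cr_T cr_F if_True if_False by blast+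
  have e': "m2 = be t2 m1'" "t1' = al m1' t2" "b0 = be t0 b1'" "t1' = al b1' t0" "b1' = be m0 b2" "m1' = al b2 m0" using h' unfolding R3sys_def cr_T cr_F if_True if_False by blast+
  show ?thesis using e(5,6,2) e'(5,6,2) by simp
qed

lemma U_H:
  assumes h: "R3sys True False False True True False t0 t1 t2 m0 m1 m2 b0 b1 b2" and h': "R3sys True False False True True False t0 t1' t2 m0 m1' m2 b0 b1' b2"
    and X: "t0 \<in> X" "t2 \<in> X" "m0 \<in> X" "m2 \<in> X" "b0 \<in> X" "b2 \<in> X" "t1 \<in> X" "m1 \<in> X" "b1 \<in> X" "t1' \<in> X" "m1' \<in> X" "b1' \<in> X"
  shows "t1 = t1' \<and> m1 = m1' \<and> b1 = b1'"
proof -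
  have e: "m1 = be t1 m0" "t0 = al m0 t1" "b1 = be t1 b2" "t2 = al b2 t1" "b0 = be m1 b1" "m2 = al b1 m1" using h unfolding R3sys_def cr_T cr_F if_True if_False by blast+
  have e': "m1' = be t1' m0" "t0 = al m0 t1'" "b1' = be t1' b2" "t2 = al b2 t1'" "b0 = be m1' b1'" "m2 = al b1' m1'" using h' unfolding R3sys_def cr_T cr_F if_True if_False by blast+
  have "al m0 t1 = al m0 t1'" using e(2) e'(2) by simp
  then have t: "t1 = t1'" using al_inj[OF X(3) X(7) X(10)] by blast
  show ?thesis using t e(1,3) e'(1,3) by simp
qed


lemma ok_cases: "r3_ok True sy sz oT oM oB \<Longrightarrow> (sy \<and> sz \<and> oT \<and> oM \<and> oB) \<or> (sy \<and> sz \<and> \<not> oT \<and> \<not> oM \<and> \<not> oB) \<or>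
     (sy \<and> \<not> sz \<and> \<not> oT \<and> oM \<and> oB) \<or> (sy \<and> \<not> sz \<and> oT \<and> \<not> oM \<and> \<not> oB) \<or>
     (\<not> sy \<and> sz \<and> oT \<and> \<not> oM \<and> oB) \<or> (\<not> sy \<and> sz \<and> \<not> oT \<and> oM \<and> \<not> oB) \<or>
     (\<not> sy \<and> \<not> sz \<and> \<not> oT \<and> \<not> oM \<and> oB) \<or> (\<not> sy \<and> \<not> sz \<and> oT \<and> oM \<and> \<not> oB)"
  unfolding r3_ok_def by auto

lemma R3_ex_T:
  assumes ok: "r3_ok True sy sz oT oM oB" and h: "R3sys True sy sz oT oM oB t0 t1 t2 m0 m1 m2 b0 b1 b2"
    and X: "t0 \<in> X" "t2 \<in> X" "m0 \<in> X" "m2 \<in> X" "b0 \<in> X" "b2 \<in> X" "t1 \<in> X" "m1 \<in> X" "b1 \<in> X"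
  shows "\<exists>T\<in>X. \<exists>M\<in>X. \<exists>Bb\<in>X. R3sys True sy sz (\<not> oT) (\<not> oM) (\<not> oB) t0 T t2 m0 M m2 b0 Bb b2"
  using ok_cases[OF ok]
  apply (elim disjE conjE)
  subgoal using R3_AB[of t0 t1 t2 m0 m1 m2 b0 b1 b2, OF _ X] h by simp
  subgoal using R3_BA[of t0 t1 t2 m0 m1 m2 b0 b1 b2, OF _ X] h by simp
  subgoal using R3_CD[of t0 t1 t2 m0 m1 m2 b0 b1 b2, OF _ X] h by simp
  subgoal using R3_DC[of t0 t1 t2 m0 m1 m2 b0 b1 b2, OF _ X] h by simp
  subgoal using R3_EF[of t0 t1 t2 m0 m1 m2 b0 b1 b2, OF _ X] h by simp
  subgoal using R3_FE[of t0 t1 t2 m0 m1 m2 b0 b1 b2, OF _ X] h by simp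
  subgoal using R3_GH[of t0 t1 t2 m0 m1 m2 b0 b1 b2, OF _ X] h by simp
  subgoal using R3_HG[of t0 t1 t2 m0 m1 m2 b0 b1 b2, OF _ X] h by simp
  done

lemma R3_uniq_T:
  assumes ok: "r3_ok True sy sz oT oM oB" and h: "R3sys True sy sz oT oM oB t0 t1 t2 m0 m1 m2 b0 b1 b2"
    and h': "R3sys True sy sz oT oM oB t0 t1' t2 m0 m1' m2 b0 b1' b2"
    and X: "t0 \<in> X" "t2 \<in> X" "m0 \<in> X" "m2 \<in> X" "b0 \<in> X" "b2 \<in> X" "t1 \<in> X" "m1 \<in> X" "b1 \<in> X" "t1' \<in> X" "m1' \<in> X" "b1' \<in> X"
  shows "t1 = t1' \<and> m1 = m1' \<and> b1 = b1'"
  using ok_cases[OF ok]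
  apply (elim disjE conjE)
  subgoal using U_A[of t0 t1 t2 m0 m1 m2 b0 b1 b2 t1' m1' b1', OF _ _ X] h h' by simp
  subgoal using U_B[of t0 t1 t2 m0 m1 m2 b0 b1 b2 t1' m1' b1', OF _ _ X] h h' by simp
  subgoal using U_C[of t0 t1 t2 m0 m1 m2 b0 b1 b2 t1' m1' b1', OF _ _ X] h h' by simp
  subgoal using U_D[of t0 t1 t2 m0 m1 m2 b0 b1 b2 t1' m1' b1', OF _ _ X] h h' by simp
  subgoal using U_E[of t0 t1 t2 m0 m1 m2 b0 b1 b2 t1' m1' b1', OF _ _ X] h h' by simp
  subgoal using U_F[of t0 t1 t2 m0 m1 m2 b0 b1 b2 t1' m1' b1', OF _ _ X] h h' by simp
  subgoal using U_G[of t0 t1 t2 m0 m1 m2 b0 b1 b2 t1' m1' b1', OF _ _ X] h h' by simp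
  subgoal using U_H[of t0 t1 t2 m0 m1 m2 b0 b1 b2 t1' m1' b1', OF _ _ X] h h' by simp
  done

lemma R3sys_F: "R3sys False sy sz oT oM oB t0 t1 t2 m0 m1 m2 b0 b1 b2 =
  R3sys True (\<not> sy) (\<not> sz) (\<not> oT) (\<not> oM) (\<not> oB) t2 t1 t0 m2 m1 m0 b2 b1 b0"
  using R3sys_rev[of True "\<not> sy" "\<not> sz" oT oM oB t0 t1 t2 m0 m1 m2 b0 b1 b2] by simp

lemma ok_F: "r3_ok False sy sz oT oM oB \<Longrightarrow> r3_ok True (\<not> sy) (\<not> sz) (\<not> oT) (\<not> oM) (\<not> oB)"
  unfolding r3_ok_def by auto

lemma R3_ex:
  assumes ok: "r3_ok sx sy sz oT oM oB" and h: "R3sys sx sy sz oT oM oB t0 t1 t2 m0 m1 m2 b0 b1 b2"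
    and X: "t0 \<in> X" "t2 \<in> X" "m0 \<in> X" "m2 \<in> X" "b0 \<in> X" "b2 \<in> X" "t1 \<in> X" "m1 \<in> X" "b1 \<in> X"
  shows "\<exists>T\<in>X. \<exists>M\<in>X. \<exists>Bb\<in>X. R3sys sx sy sz (\<not> oT) (\<not> oM) (\<not> oB) t0 T t2 m0 M m2 b0 Bb b2"
proof (cases sx)
  case True
  then show ?thesis using R3_ex_T[of sy sz oT oM oB, OF _ _ X] ok h by simp
next
  case False
  have ok': "r3_ok True (\<not> sy) (\<not> sz) (\<not> oT) (\<not> oM) (\<not> oB)" using ok False ok_F by simp
  have h': "R3sys True (\<not> sy) (\<not> sz) (\<not> oT) (\<not> oM) (\<not> oB) t2 t1 t0 m2 m1 m0 b2 b1 b0"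
    using h False R3sys_F by simp
  obtain T M Bb where "T \<in> X" "M \<in> X" "Bb \<in> X"
    "R3sys True (\<not> sy) (\<not> sz) (\<not> \<not> oT) (\<not> \<not> oM) (\<not> \<not> oB) t2 T t0 m2 M m0 b2 Bb b0"
    using R3_ex_T[OF ok' h'] X by blast
  then show ?thesis using False R3sys_F[of sy sz "\<not> oT" "\<not> oM" "\<not> oB" t0 T t2 m0 M m2 b0 Bb b2] by auto
qed

lemma R3_uniq:
  assumes ok: "r3_ok sx sy sz oT oM oB" and h: "R3sys sx sy sz oT oM oB t0 t1 t2 m0 m1 m2 b0 b1 b2"
    and h': "R3sys sx sy sz oT oM oB t0 t1' t2 m0 m1' m2 b0 b1' b2"
    and X: "t0 \<in> X" "t2 \<in> X" "m0 \<in> X" "m2 \<in> X" "b0 \<in> X" "b2 \<in> X" "t1 \<in> X" "m1 \<in> X" "b1 \<in> X" "t1' \<in> X" "m1' \<in> X" "b1' \<in> X"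
  shows "t1 = t1' \<and> m1 = m1' \<and> b1 = b1'"
proof (cases sx)
  case True
  then show ?thesis using R3_uniq_T[of sy sz oT oM oB, OF _ _ _ X] ok h h' by simp
next
  case False
  have ok': "r3_ok True (\<not> sy) (\<not> sz) (\<not> oT) (\<not> oM) (\<not> oB)" using ok False ok_F by simp
  have "R3sys True (\<not> sy) (\<not> sz) (\<not> oT) (\<not> oM) (\<not> oB) t2 t1 t0 m2 m1 m0 b2 b1 b0"
    "R3sys True (\<not> sy) (\<not> sz) (\<not> oT) (\<not> oM) (\<not> oB) t2 t1' t0 m2 m1' m0 b2 b1' b0"
    using h h' False R3sys_F by simp_all
  then show ?thesis using R3_uniq_T[OF ok'] X by blast
qed

end

lemma hd_app_cons: "hd (C @ e # d # R) = hd (C @ [e])" by (cases C) auto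

lemma ann_app2: "length g = 2 \<Longrightarrow> cv \<noteq> [] \<Longrightarrow> ann (g @ v) (e # d # cv) = ann g [e, d, hd cv] @ ann v cv"
  using ann_append[of "[e, d]" g cv v] by simp

lemma len_seg[simp]: "length (r3_seg x y z sx sy sz a b c n) = 2" by (simp add: r3_seg_def)

lemma lab_seg: "fst ` set (r3_seg x y z sx sy sz a b c n) \<subseteq> {x, y, z}" by (auto simp: r3_seg_def)

lemma dec2: "n + 2 \<le> length cs \<Longrightarrow> \<exists>C e d R. cs = C @ e # d # R \<and> length C = n"
proof -
  assume h: "n + 2 \<le> length cs"
  have 1: "drop n cs = cs ! n # drop (Suc n) cs" using h by (simp add: Cons_nth_drop_Suc)
  have 2: "drop (Suc n) cs = cs ! Suc n # drop (Suc (Suc n)) cs" using h by (simp add: Cons_nth_drop_Suc)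
  have "cs = take n cs @ drop n cs" by simp
  also have "\<dots> = take n cs @ cs ! n # cs ! Suc n # drop (Suc (Suc n)) cs" using 1 2 by simp
  finally have "cs = take n cs @ cs ! n # cs ! Suc n # drop (Suc (Suc n)) cs" .
  moreover have "length (take n cs) = n" using h by simp
  ultimately show ?thesis by blast
qed

lemma ann_W3:
  assumes "length C1 = length p1" "length C2 = length p2" "length C3 = length p3" "C4 \<noteq> []"
    "length g1 = 2" "length g2 = 2" "length g3 = 2"
  shows "set (ann (p1 @ g1 @ p2 @ g2 @ p3 @ g3 @ p4) (C1 @ e1 # d1 # C2 @ e2 # d2 # C3 @ e3 # d3 # C4)) =
    (set (ann p1 (C1 @ [e1])) \<union> set (ann p2 (C2 @ [e2])) \<union> set (ann p3 (C3 @ [e3])) \<union> set (ann p4 C4)) \<union>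
    (set (ann g1 [e1, d1, hd (C2 @ [e2])]) \<union> set (ann g2 [e2, d2, hd (C3 @ [e3])]) \<union> set (ann g3 [e3, d3, hd C4]))"
proof -
  have "ann (p1 @ g1 @ p2 @ g2 @ p3 @ g3 @ p4) (C1 @ e1 # d1 # C2 @ e2 # d2 # C3 @ e3 # d3 # C4) =
     ann p1 (C1 @ [e1]) @ ann g1 [e1, d1, hd (C2 @ [e2])] @ ann p2 (C2 @ [e2]) @ ann g2 [e2, d2, hd (C3 @ [e3])]
     @ ann p3 (C3 @ [e3]) @ ann g3 [e3, d3, hd C4] @ ann p4 C4"
    using assms by (simp add: ann_append ann_app2 hd_app_cons)
  then show ?thesis by auto
qed



lemma good_pair: "good al be {((l, True, s), a, a'), ((l, False, s), b, b')} = cr al be s a a' b b'"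
  unfolding good_def by auto

lemma good_Un': "\<forall>e\<in>A. \<forall>e'\<in>B. fst (fst e) \<noteq> fst (fst e') \<Longrightarrow> good al be (A \<union> B) = (good al be A \<and> good al be B)"
  by (rule good_Un) auto

lemma good6: "distinct [x, y, z] \<Longrightarrow>
  good al be ({((x, True, sx), a1, a2), ((x, False, sx), b1, b2)} \<union> {((y, True, sy), c1, c2), ((y, False, sy), d1, d2)}
     \<union> {((z, True, sz), e1, e2), ((z, False, sz), f1, f2)}) =
   (cr al be sx a1 a2 b1 b2 \<and> cr al be sy c1 c2 d1 d2 \<and> cr al be sz e1 e2 f1 f2)"
proof -
  assume d: "distinct [x, y, z]"
  let ?A = "{((x, True, sx), a1, a2), ((x, False, sx), b1, b2)}"
  let ?B = "{((y, True, sy), c1, c2), ((y, False, sy), d1, d2)}"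
  let ?C = "{((z, True, sz), e1, e2), ((z, False, sz), f1, f2)}"
  have 1: "good al be (?A \<union> ?B \<union> ?C) = (good al be (?A \<union> ?B) \<and> good al be ?C)"
    by (rule good_Un') (use d in auto)
  have 2: "good al be (?A \<union> ?B) = (good al be ?A \<and> good al be ?B)"
    by (rule good_Un') (use d in auto)
  show ?thesis unfolding 1 2 good_pair by simp
qed

context bq begin

lemma good_R3: "distinct [x, y, z] \<Longrightarrow>
  good al be (set (ann (r3_seg x y z sx sy sz oT oM oB 0) [t0, t1, t2]) \<union> set (ann (r3_seg x y z sx sy sz oT oM oB 1) [m0, m1, m2])
    \<union> set (ann (r3_seg x y z sx sy sz oT oM oB 2) [b0, b1, b2])) =
   R3sys sx sy sz oT oM oB t0 t1 t2 m0 m1 m2 b0 b1 b2"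
proof -
  assume d: "distinct [x, y, z]"
  have "set (ann (r3_seg x y z sx sy sz oT oM oB 0) [t0, t1, t2]) \<union> set (ann (r3_seg x y z sx sy sz oT oM oB 1) [m0, m1, m2])
    \<union> set (ann (r3_seg x y z sx sy sz oT oM oB 2) [b0, b1, b2]) =
    {((x, True, sx), (if oT then t0 else t1), (if oT then t1 else t2)), ((x, False, sx), (if oM then m0 else m1), (if oM then m1 else m2))}
    \<union> {((y, True, sy), (if oT then t1 else t0), (if oT then t2 else t1)), ((y, False, sy), (if oB then b0 else b1), (if oB then b1 else b2))}
    \<union> {((z, True, sz), (if oM then m1 else m0), (if oM then m2 else m1)), ((z, False, sz), (if oB then b1 else b0), (if oB then b2 else b1))}"
    (is "_ = ?S")
    by (cases oT; cases oM; cases oB) (auto simp: r3_seg_def)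
  then show ?thesis unfolding R3sys_def by (simp only: good6[OF d])
qed

end

definition sel :: "nat \<Rightarrow> nat \<Rightarrow> 'b \<Rightarrow> 'b \<Rightarrow> 'b \<Rightarrow> nat \<Rightarrow> 'b" where
  "sel i j u1 u2 u3 n = (if n = i then u1 else if n = j then u2 else u3)"

lemma lt3: "n < (3::nat) \<Longrightarrow> n = 0 \<or> n = 1 \<or> n = 2" by arith

lemma perm_cases:
  assumes "(i::nat) < 3" "j < 3" "k < 3" "distinct [i, j, k]"
  shows "(i = 0 \<and> j = 1 \<and> k = 2) \<or> (i = 0 \<and> j = 2 \<and> k = 1) \<or> (i = 1 \<and> j = 0 \<and> k = 2) \<or>
  (i = 1 \<and> j = 2 \<and> k = 0) \<or> (i = 2 \<and> j = 0 \<and> k = 1) \<or> (i = 2 \<and> j = 1 \<and> k = 0)"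
  using lt3[OF assms(1)] lt3[OF assms(2)] lt3[OF assms(3)] assms(4) by (elim disjE) simp_all

lemma sel_F:
  assumes "i < 3" "j < 3" "k < 3" "distinct [i, j, k]" "n < 3"
  shows "sel i j (F i) (F j) (F k) n = F n"
  using perm_cases[OF assms(1-4)] lt3[OF assms(5)] unfolding sel_def by (elim disjE conjE) simp_all

lemma sel_ijk: "distinct [i, j, k] \<Longrightarrow> sel i j u1 u2 u3 i = u1 \<and> sel i j u1 u2 u3 j = u2 \<and> sel i j u1 u2 u3 k = u3"
  unfolding sel_def by auto

lemma loc_perm:
  assumes "i < 3" "j < 3" "k < 3" "distinct [i, j, k]"
  shows "set (ann (g i) [e1, d1, f1]) \<union> set (ann (g j) [e2, d2, f2]) \<union> set (ann (g k) [e3, d3, f3]) =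
    set (ann (g 0) [sel i j e1 e2 e3 0, sel i j d1 d2 d3 0, sel i j f1 f2 f3 0]) \<union>
    set (ann (g 1) [sel i j e1 e2 e3 1, sel i j d1 d2 d3 1, sel i j f1 f2 f3 1]) \<union>
    set (ann (g 2) [sel i j e1 e2 e3 2, sel i j d1 d2 d3 2, sel i j f1 f2 f3 2])"
  using perm_cases[OF assms] by (elim disjE conjE) (simp_all add: sel_def, blast+)

lemma lab_ann_sub: "e \<in> set (ann w cs) \<Longrightarrow> fst (fst e) \<in> fst ` set w"
  using fst_set_ann by (metis image_eqI)

context bq begin

lemma R3_good:
  assumes len: "length C1 = length p1" "length C2 = length p2" "length C3 = length p3" "C4 \<noteq> []"
    and ijk: "i < 3" "j < 3" "k < 3" "distinct [i, j, k]"
    and dxyz: "distinct [x, y, z]"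
    and disj: "fst ` set (p1 @ p2 @ p3 @ p4) \<inter> {x, y, z} = {}"
  shows "good al be (set (ann (p1 @ r3_seg x y z sx sy sz a b c i @ p2 @ r3_seg x y z sx sy sz a b c j @ p3
       @ r3_seg x y z sx sy sz a b c k @ p4) (C1 @ e1 # d1 # C2 @ e2 # d2 # C3 @ e3 # d3 # C4))) \<longleftrightarrow>
    good al be (set (ann p1 (C1 @ [e1])) \<union> set (ann p2 (C2 @ [e2])) \<union> set (ann p3 (C3 @ [e3])) \<union> set (ann p4 C4)) \<and>
    R3sys sx sy sz a b c
      (sel i j e1 e2 e3 0) (sel i j d1 d2 d3 0) (sel i j (hd (C2 @ [e2])) (hd (C3 @ [e3])) (hd C4) 0)
      (sel i j e1 e2 e3 1) (sel i j d1 d2 d3 1) (sel i j (hd (C2 @ [e2])) (hd (C3 @ [e3])) (hd C4) 1)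
      (sel i j e1 e2 e3 2) (sel i j d1 d2 d3 2) (sel i j (hd (C2 @ [e2])) (hd (C3 @ [e3])) (hd C4) 2)"
proof -
  let ?g = "r3_seg x y z sx sy sz a b c"
  let ?Out = "set (ann p1 (C1 @ [e1])) \<union> set (ann p2 (C2 @ [e2])) \<union> set (ann p3 (C3 @ [e3])) \<union> set (ann p4 C4)"
  let ?Loc = "set (ann (?g i) [e1, d1, hd (C2 @ [e2])]) \<union> set (ann (?g j) [e2, d2, hd (C3 @ [e3])]) \<union> set (ann (?g k) [e3, d3, hd C4])"
  have 1: "set (ann (p1 @ ?g i @ p2 @ ?g j @ p3 @ ?g k @ p4) (C1 @ e1 # d1 # C2 @ e2 # d2 # C3 @ e3 # d3 # C4)) = ?Out \<union> ?Loc"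
    by (rule ann_W3) (use len in simp_all)
  have lo: "fst (fst e) \<in> fst ` set (p1 @ p2 @ p3 @ p4)" if "e \<in> ?Out" for e
    using that by (auto dest!: lab_ann_sub)
  have ll: "fst (fst e) \<in> {x, y, z}" if "e \<in> ?Loc" for e
    using that lab_seg[of x y z sx sy sz a b c] by (auto dest!: lab_ann_sub)
  have 2: "good al be (?Out \<union> ?Loc) = (good al be ?Out \<and> good al be ?Loc)"
  proof (rule good_Un)
    fix e e' assume "e \<in> ?Out" "e' \<in> ?Loc"
    then show "fst (fst e) \<noteq> fst (fst e')" using lo ll disj by blast
  qed
  have 3: "?Loc = set (ann (?g 0) [sel i j e1 e2 e3 0, sel i j d1 d2 d3 0, sel i j (hd (C2 @ [e2])) (hd (C3 @ [e3])) (hd C4) 0]) \<union>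
    set (ann (?g 1) [sel i j e1 e2 e3 1, sel i j d1 d2 d3 1, sel i j (hd (C2 @ [e2])) (hd (C3 @ [e3])) (hd C4) 1]) \<union>
    set (ann (?g 2) [sel i j e1 e2 e3 2, sel i j d1 d2 d3 2, sel i j (hd (C2 @ [e2])) (hd (C3 @ [e3])) (hd C4) 2])"
    by (rule loc_perm[OF ijk])
  show ?thesis unfolding 1 2 unfolding 3 unfolding good_R3[OF dxyz] by (rule refl)
qed

end

lemma finite_CL: "finite X \<Longrightarrow> finite (CL X al be w p q)"
proof -
  assume f: "finite X"
  have "CL X al be w p q \<subseteq> {cs. set cs \<subseteq> X \<and> length cs = Suc (length w)}" unfolding CL_def by auto
  moreover have "finite {cs. set cs \<subseteq> X \<and> length cs = Suc (length w)}" using finite_lists_length_eq[OF f] .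
  ultimately show ?thesis by (rule finite_subset)
qed

lemma app_eq: "length a = length b \<Longrightarrow> (a @ r = b @ r') = (a = b \<and> r = r')"
  by simp

lemma sel_in: "u1 \<in> A \<Longrightarrow> u2 \<in> A \<Longrightarrow> u3 \<in> A \<Longrightarrow> sel i j u1 u2 u3 n \<in> A"
  unfolding sel_def by simp

lemma hd_in: "set (C @ [e]) \<subseteq> A \<Longrightarrow> hd (C @ [e]) \<in> A"
  by (cases C) auto

lemma dec3:
  assumes "length cs = Suc (length p1 + 2 + length p2 + 2 + length p3 + 2 + length p4)"
  shows "\<exists>C1 e1 d1 C2 e2 d2 C3 e3 d3 C4. cs = C1 @ e1 # d1 # C2 @ e2 # d2 # C3 @ e3 # d3 # C4 \<and>
     length C1 = length p1 \<and> length C2 = length p2 \<and> length C3 = length p3 \<and> length C4 = Suc (length p4)"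
proof -
  obtain C1 e1 d1 R1 where 1: "cs = C1 @ e1 # d1 # R1" "length C1 = length p1" using dec2[of "length p1" cs] assms by auto
  have "length R1 = Suc (length p2 + 2 + length p3 + 2 + length p4)" using 1 assms by simp
  then obtain C2 e2 d2 R2 where 2: "R1 = C2 @ e2 # d2 # R2" "length C2 = length p2" using dec2[of "length p2" R1] by auto
  have "length R2 = Suc (length p3 + 2 + length p4)" using 1 2 assms by simp
  then obtain C3 e3 d3 C4 where 3: "R2 = C3 @ e3 # d3 # C4" "length C3 = length p3" using dec2[of "length p3" R2] by auto
  have "length C4 = Suc (length p4)" using 1 2 3 assms by simp
  then show ?thesis using 1 2 3 by blast
qed

context bq begin

lemma R3_le:
  assumes ok: "r3_ok sx sy sz oT oM oB"
    and ijk: "i < 3" "j < 3" "k < 3" "distinct [i, j, k]"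
    and dxyz: "distinct [x, y, z]"
    and disj: "fst ` set (p1 @ p2 @ p3 @ p4) \<inter> {x, y, z} = {}"
  shows "card (CL X al be (p1 @ r3_seg x y z sx sy sz oT oM oB i @ p2 @ r3_seg x y z sx sy sz oT oM oB j @ p3
       @ r3_seg x y z sx sy sz oT oM oB k @ p4) p q)
    \<le> card (CL X al be (p1 @ r3_seg x y z sx sy sz (\<not> oT) (\<not> oM) (\<not> oB) i @ p2 @ r3_seg x y z sx sy sz (\<not> oT) (\<not> oM) (\<not> oB) j @ p3
       @ r3_seg x y z sx sy sz (\<not> oT) (\<not> oM) (\<not> oB) k @ p4) p q)"
    (is "card (CL X al be ?w p q) \<le> card (CL X al be ?w' p q)")
proof -
  define rel where "rel = (\<lambda>(cs::'a list) (cs'::'a list). \<exists>C1 e1 d1 C2 e2 d2 C3 e3 d3 C4 d1' d2' d3'.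
     length C1 = length p1 \<and> length C2 = length p2 \<and> length C3 = length p3 \<and> length C4 = Suc (length p4) \<and>
     cs = C1 @ e1 # d1 # C2 @ e2 # d2 # C3 @ e3 # d3 # C4 \<and> cs' = C1 @ e1 # d1' # C2 @ e2 # d2' # C3 @ e3 # d3' # C4)"
  have lw: "length ?w = length p1 + 2 + length p2 + 2 + length p3 + 2 + length p4" by simp
  have lw': "length ?w' = length p1 + 2 + length p2 + 2 + length p3 + 2 + length p4" by simp
  show ?thesis
  proof (rule card_le_if_inj_on_rel[where r = rel])
    show "finite (CL X al be ?w' p q)" by (rule finite_CL[OF fin])
  next
    fix cs assume cs: "cs \<in> CL X al be ?w p q"
    then have csX: "set cs \<subseteq> X" and csl: "length cs = Suc (length ?w)" and csg: "good al be (set (ann ?w cs))"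
      and csh: "hd cs = p" and cst: "last cs = q" unfolding CL_def by auto
    obtain C1 e1 d1 C2 e2 d2 C3 e3 d3 C4 where dec: "cs = C1 @ e1 # d1 # C2 @ e2 # d2 # C3 @ e3 # d3 # C4"
      and l: "length C1 = length p1" "length C2 = length p2" "length C3 = length p3" "length C4 = Suc (length p4)"
      using dec3[of cs p1 p2 p3 p4] csl lw by auto
    have C4ne: "C4 \<noteq> []" using l(4) by auto
    let ?f1 = "hd (C2 @ [e2])" and ?f2 = "hd (C3 @ [e3])" and ?f3 = "hd C4"
    have inX: "e1 \<in> X" "d1 \<in> X" "e2 \<in> X" "d2 \<in> X" "e3 \<in> X" "d3 \<in> X" "?f1 \<in> X" "?f2 \<in> X" "?f3 \<in> X"
      using csX C4ne unfolding dec by (auto intro!: hd_in)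
    have G: "good al be (set (ann p1 (C1 @ [e1])) \<union> set (ann p2 (C2 @ [e2])) \<union> set (ann p3 (C3 @ [e3])) \<union> set (ann p4 C4)) \<and>
      R3sys sx sy sz oT oM oB
      (sel i j e1 e2 e3 0) (sel i j d1 d2 d3 0) (sel i j ?f1 ?f2 ?f3 0)
      (sel i j e1 e2 e3 1) (sel i j d1 d2 d3 1) (sel i j ?f1 ?f2 ?f3 1)
      (sel i j e1 e2 e3 2) (sel i j d1 d2 d3 2) (sel i j ?f1 ?f2 ?f3 2)"
      using csg unfolding dec R3_good[OF l(1-3) C4ne ijk dxyz disj] .
    have sX: "sel i j e1 e2 e3 n \<in> X" "sel i j d1 d2 d3 n \<in> X" "sel i j ?f1 ?f2 ?f3 n \<in> X" for n
      using inX by (simp_all add: sel_in)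
    note RE = R3_ex[OF ok conjunct2[OF G] sX(1)[of 0] sX(3)[of 0] sX(1)[of 1] sX(3)[of 1] sX(1)[of 2] sX(3)[of 2]
      sX(2)[of 0] sX(2)[of 1] sX(2)[of 2]]
    obtain T M Bb where TMB: "T \<in> X" "M \<in> X" "Bb \<in> X"
      "R3sys sx sy sz (\<not> oT) (\<not> oM) (\<not> oB)
      (sel i j e1 e2 e3 0) T (sel i j ?f1 ?f2 ?f3 0)
      (sel i j e1 e2 e3 1) M (sel i j ?f1 ?f2 ?f3 1)
      (sel i j e1 e2 e3 2) Bb (sel i j ?f1 ?f2 ?f3 2)"
      using RE by blast
    define nv where "nv = (\<lambda>n::nat. if n = 0 then T else if n = 1 then M else Bb)"
    have nvX: "nv n \<in> X" for n unfolding nv_def using TMB by simp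
    have nvs: "sel i j (nv i) (nv j) (nv k) n = nv n" if "n < 3" for n using sel_F[OF ijk that] .
    define cs' where "cs' = C1 @ e1 # nv i # C2 @ e2 # nv j # C3 @ e3 # nv k # C4"
    have n0: "sel i j (nv i) (nv j) (nv k) 0 = T" using nvs[of 0] by (simp add: nv_def)
    have n1: "sel i j (nv i) (nv j) (nv k) 1 = M" using nvs[of 1] by (simp add: nv_def)
    have n2: "sel i j (nv i) (nv j) (nv k) 2 = Bb" using nvs[of 2] by (simp add: nv_def)
    have "good al be (set (ann ?w' cs'))"
      unfolding cs'_def R3_good[OF l(1-3) C4ne ijk dxyz disj] n0 n1 n2
      using conjunct1[OF G] TMB(4) by (rule conjI)
    moreover have "set cs' \<subseteq> X" using csX nvX unfolding dec cs'_def by auto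
    moreover have "length cs' = Suc (length ?w')" using csl lw lw' unfolding dec cs'_def by simp
    moreover have "hd cs' = p" using csh unfolding dec cs'_def by (cases C1) auto
    moreover have "last cs' = q" using cst C4ne unfolding dec cs'_def by simp
    ultimately have "cs' \<in> CL X al be ?w' p q" unfolding CL_def by blast
    moreover have "rel cs cs'" unfolding rel_def dec cs'_def using l by blast
    ultimately show "\<exists>b. b \<in> CL X al be ?w' p q \<and> rel cs b" by blast
  next
    fix a1 a2 b assume a1: "a1 \<in> CL X al be ?w p q" and a2: "a2 \<in> CL X al be ?w p q"
      and b: "b \<in> CL X al be ?w' p q" and r1: "rel a1 b" and r2: "rel a2 b"
    obtain C1 e1 d1 C2 e2 d2 C3 e3 d3 C4 d1' d2' d3' where
      l: "length C1 = length p1" "length C2 = length p2" "length C3 = length p3" "length C4 = Suc (length p4)"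
      and a1d: "a1 = C1 @ e1 # d1 # C2 @ e2 # d2 # C3 @ e3 # d3 # C4"
      and bd: "b = C1 @ e1 # d1' # C2 @ e2 # d2' # C3 @ e3 # d3' # C4"
      using r1 unfolding rel_def by blast
    obtain C1b e1b g1 C2b e2b g2 C3b e3b g3 C4b g1' g2' g3' where
      lb: "length C1b = length p1" "length C2b = length p2" "length C3b = length p3" "length C4b = Suc (length p4)"
      and a2d: "a2 = C1b @ e1b # g1 # C2b @ e2b # g2 # C3b @ e3b # g3 # C4b"
      and bd2: "b = C1b @ e1b # g1' # C2b @ e2b # g2' # C3b @ e3b # g3' # C4b"
      using r2 unfolding rel_def by blast
    have eqs: "C1b = C1 \<and> e1b = e1 \<and> C2b = C2 \<and> e2b = e2 \<and> C3b = C3 \<and> e3b = e3 \<and> C4b = C4"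
      using bd bd2 l lb by (simp add: app_eq)
    have a2d': "a2 = C1 @ e1 # g1 # C2 @ e2 # g2 # C3 @ e3 # g3 # C4" using a2d eqs by simp
    have C4ne: "C4 \<noteq> []" using l(4) by auto
    let ?f1 = "hd (C2 @ [e2])" and ?f2 = "hd (C3 @ [e3])" and ?f3 = "hd C4"
    have X1: "set a1 \<subseteq> X" and g1: "good al be (set (ann ?w a1))" using a1 unfolding CL_def by auto
    have X2: "set a2 \<subseteq> X" and g2: "good al be (set (ann ?w a2))" using a2 unfolding CL_def by auto
    have inX: "e1 \<in> X" "d1 \<in> X" "e2 \<in> X" "d2 \<in> X" "e3 \<in> X" "d3 \<in> X" "?f1 \<in> X" "?f2 \<in> X" "?f3 \<in> X"
      "g1 \<in> X" "g2 \<in> X" "g3 \<in> X"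
      using X1 X2 C4ne unfolding a1d a2d' by (auto intro!: hd_in)
    have R1: "R3sys sx sy sz oT oM oB
      (sel i j e1 e2 e3 0) (sel i j d1 d2 d3 0) (sel i j ?f1 ?f2 ?f3 0)
      (sel i j e1 e2 e3 1) (sel i j d1 d2 d3 1) (sel i j ?f1 ?f2 ?f3 1)
      (sel i j e1 e2 e3 2) (sel i j d1 d2 d3 2) (sel i j ?f1 ?f2 ?f3 2)"
      using g1 unfolding a1d R3_good[OF l(1-3) C4ne ijk dxyz disj] by blast
    have R2: "R3sys sx sy sz oT oM oB
      (sel i j e1 e2 e3 0) (sel i j g1 g2 g3 0) (sel i j ?f1 ?f2 ?f3 0)
      (sel i j e1 e2 e3 1) (sel i j g1 g2 g3 1) (sel i j ?f1 ?f2 ?f3 1)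
      (sel i j e1 e2 e3 2) (sel i j g1 g2 g3 2) (sel i j ?f1 ?f2 ?f3 2)"
      using g2 unfolding a2d' R3_good[OF l(1-3) C4ne ijk dxyz disj] by blast
    have sX: "sel i j e1 e2 e3 n \<in> X" "sel i j d1 d2 d3 n \<in> X" "sel i j ?f1 ?f2 ?f3 n \<in> X" "sel i j g1 g2 g3 n \<in> X" for n
      using inX by (simp_all add: sel_in)
    have U: "sel i j d1 d2 d3 0 = sel i j g1 g2 g3 0 \<and> sel i j d1 d2 d3 1 = sel i j g1 g2 g3 1 \<and> sel i j d1 d2 d3 2 = sel i j g1 g2 g3 2"
      by (rule R3_uniq[OF ok R1 R2 sX(1)[of 0] sX(3)[of 0] sX(1)[of 1] sX(3)[of 1] sX(1)[of 2] sX(3)[of 2]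
      sX(2)[of 0] sX(2)[of 1] sX(2)[of 2] sX(4)[of 0] sX(4)[of 1] sX(4)[of 2]])
    have SU: "sel i j d1 d2 d3 n = sel i j g1 g2 g3 n" if "n < 3" for n
      using U lt3[OF that] by (elim disjE) simp_all
    have "d1 = g1" using SU[OF ijk(1)] sel_ijk[OF ijk(4), of d1 d2 d3] sel_ijk[OF ijk(4), of g1 g2 g3] by simp
    moreover have "d2 = g2" using SU[OF ijk(2)] sel_ijk[OF ijk(4), of d1 d2 d3] sel_ijk[OF ijk(4), of g1 g2 g3] by simp
    moreover have "d3 = g3" using SU[OF ijk(3)] sel_ijk[OF ijk(4), of d1 d2 d3] sel_ijk[OF ijk(4), of g1 g2 g3] by simp
    ultimately have "d1 = g1 \<and> d2 = g2 \<and> d3 = g3" by simp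
    then show "a1 = a2" unfolding a1d a2d' by simp
  qed
qed

end

lemma dec1: "n \<le> length cs \<Longrightarrow> \<exists>C R. cs = C @ R \<and> length C = n"
  by (metis append_take_drop_id length_take min.absorb2)

lemma hd_app_ne: "R \<noteq> [] \<Longrightarrow> hd (C @ [hd R]) = hd (C @ R)"
  by (cases C) auto

context bq begin

lemma R1_split:
  assumes l: "length C1 = length u" "R \<noteq> []" and disj: "l \<notin> fst ` set (u @ v)"
  shows "good al be (set (ann (u @ [(l, ov, s), (l, \<not> ov, s)] @ v) (C1 @ e # d # R))) \<longleftrightarrow>
    good al be (set (ann u (C1 @ [e])) \<union> set (ann v R)) \<and> good al be (set (ann [(l, ov, s), (l, \<not> ov, s)] [e, d, hd R]))"
proof -
  let ?Out = "set (ann u (C1 @ [e])) \<union> set (ann v R)" and ?Loc = "set (ann [(l, ov, s), (l, \<not> ov, s)] [e, d, hd R])"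
  have 1: "set (ann (u @ [(l, ov, s), (l, \<not> ov, s)] @ v) (C1 @ e # d # R)) = ?Out \<union> ?Loc"
    using l by (auto simp: ann_append ann_app2)
  have 2: "good al be (?Out \<union> ?Loc) = (good al be ?Out \<and> good al be ?Loc)"
  proof (rule good_Un)
    fix e1 e2 assume "e1 \<in> ?Out" "e2 \<in> ?Loc"
    then have "fst (fst e1) \<in> fst ` set (u @ v)" "fst (fst e2) = l"
      by (auto dest!: lab_ann_sub)
    then show "fst (fst e1) \<noteq> fst (fst e2)" using disj by metis
  qed
  show ?thesis unfolding 1 2 ..
qed

lemma R0_split:
  assumes l: "length C1 = length u" "R \<noteq> []"
  shows "set (ann (u @ v) (C1 @ R)) = set (ann u (C1 @ [hd R])) \<union> set (ann v R)"
  using l by (simp add: ann_append)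

lemma R1_le1:
  assumes disj: "l \<notin> fst ` set (u @ v)"
  shows "card (CL X al be (u @ [(l, ov, s), (l, \<not> ov, s)] @ v) p q) \<le> card (CL X al be (u @ v) p q)"
    (is "card (CL X al be ?w p q) \<le> card (CL X al be ?w' p q)")
proof -
  define rel where "rel = (\<lambda>(cs::'a list) (cs'::'a list). \<exists>C1 e d R. length C1 = length u \<and> length R = Suc (length v) \<and>
     cs = C1 @ e # d # R \<and> cs' = C1 @ R)"
  show ?thesis
  proof (rule card_le_if_inj_on_rel[where r = rel])
    show "finite (CL X al be ?w' p q)" by (rule finite_CL[OF fin])
  next
    fix cs assume cs: "cs \<in> CL X al be ?w p q"
    then have csX: "set cs \<subseteq> X" and csl: "length cs = Suc (length ?w)" and csg: "good al be (set (ann ?w cs))"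
      and csh: "hd cs = p" and cst: "last cs = q" unfolding CL_def by auto
    obtain C1 e d R where dec: "cs = C1 @ e # d # R" and l: "length C1 = length u"
      using dec2[of "length u" cs] csl by auto
    have lR: "length R = Suc (length v)" using csl dec l by simp
    then have Rne: "R \<noteq> []" by auto
    have G: "good al be (set (ann u (C1 @ [e])) \<union> set (ann v R)) \<and> good al be (set (ann [(l, ov, s), (l, \<not> ov, s)] [e, d, hd R]))"
      using csg unfolding dec R1_split[OF l Rne disj] .
    have inX: "e \<in> X" "d \<in> X" "hd R \<in> X" using csX Rne unfolding dec by auto
    have ehd: "e = hd R" using r1_eq[OF inX conjunct2[OF G]] .
    define cs' where "cs' = C1 @ R"
    have "good al be (set (ann ?w' cs'))" unfolding cs'_def R0_split[OF l Rne] using conjunct1[OF G] ehd by simp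
    moreover have "set cs' \<subseteq> X" using csX unfolding dec cs'_def by auto
    moreover have "length cs' = Suc (length ?w')" using l lR unfolding cs'_def by simp
    moreover have "hd cs' = p" using csh ehd Rne unfolding dec cs'_def by (cases C1) auto
    moreover have "last cs' = q" using cst Rne unfolding dec cs'_def by simp
    ultimately have "cs' \<in> CL X al be ?w' p q" unfolding CL_def by blast
    moreover have "rel cs cs'" unfolding rel_def cs'_def using dec l lR by blast
    ultimately show "\<exists>b. b \<in> CL X al be ?w' p q \<and> rel cs b" by blast
  next
    fix a1 a2 b assume a1: "a1 \<in> CL X al be ?w p q" and a2: "a2 \<in> CL X al be ?w p q"
      and b: "b \<in> CL X al be ?w' p q" and r1: "rel a1 b" and r2: "rel a2 b"
    obtain C1 e d R where l: "length C1 = length u" "length R = Suc (length v)"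
      and a1d: "a1 = C1 @ e # d # R" and bd: "b = C1 @ R" using r1 unfolding rel_def by blast
    obtain C1' e' d' R' where l': "length C1' = length u" "length R' = Suc (length v)"
      and a2d: "a2 = C1' @ e' # d' # R'" and bd': "b = C1' @ R'" using r2 unfolding rel_def by blast
    have eqs: "C1' = C1 \<and> R' = R" using bd bd' l l' by (simp add: app_eq)
    have Rne: "R \<noteq> []" using l by auto
    have g1': "good al be (set (ann ?w a1))" using a1 unfolding CL_def by blast
    have g2': "good al be (set (ann ?w a2))" using a2 unfolding CL_def by blast
    have g1: "good al be (set (ann [(l, ov, s), (l, \<not> ov, s)] [e, d, hd R]))"
      using g1' unfolding a1d R1_split[OF l(1) Rne disj] by blast
    have a2d': "a2 = C1 @ e' # d' # R" using a2d eqs by simp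
    have g2: "good al be (set (ann [(l, ov, s), (l, \<not> ov, s)] [e', d', hd R]))"
      using g2' unfolding a2d' R1_split[OF l(1) Rne disj] by blast
    have X1: "e \<in> X" "d \<in> X" "hd R \<in> X" using a1 Rne unfolding CL_def a1d by auto
    have X2: "e' \<in> X" "d' \<in> X" using a2 unfolding CL_def a2d by auto
    have "e = hd R" "e' = hd R" using r1_eq[OF X1 g1] r1_eq[OF X2 X1(3) g2] by auto
    then have "d = d'" using r1_uniq[OF X1(1,2,3) _ g1] X2 g2 by auto
    then show "a1 = a2" using a1d a2d eqs \<open>e = hd R\<close> \<open>e' = hd R\<close> by simp
  qed
qed

lemma R1_le2:
  assumes disj: "l \<notin> fst ` set (u @ v)"
  shows "card (CL X al be (u @ v) p q) \<le> card (CL X al be (u @ [(l, ov, s), (l, \<not> ov, s)] @ v) p q)"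
    (is "card (CL X al be ?w' p q) \<le> card (CL X al be ?w p q)")
proof -
  define rel where "rel = (\<lambda>(cs'::'a list) (cs::'a list). \<exists>C1 d R. length C1 = length u \<and> length R = Suc (length v) \<and>
     cs' = C1 @ R \<and> cs = C1 @ hd R # d # R)"
  show ?thesis
  proof (rule card_le_if_inj_on_rel[where r = rel])
    show "finite (CL X al be ?w p q)" by (rule finite_CL[OF fin])
  next
    fix cs' assume cs: "cs' \<in> CL X al be ?w' p q"
    then have csX: "set cs' \<subseteq> X" and csl: "length cs' = Suc (length ?w')" and csg: "good al be (set (ann ?w' cs'))"
      and csh: "hd cs' = p" and cst: "last cs' = q" unfolding CL_def by auto
    obtain C1 R where dec: "cs' = C1 @ R" and l: "length C1 = length u"
      using dec1[of "length u" cs'] csl by auto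
    have lR: "length R = Suc (length v)" using csl dec l by simp
    then have Rne: "R \<noteq> []" by auto
    have hX: "hd R \<in> X" using csX Rne unfolding dec by auto
    obtain d where dX: "d \<in> X" and gd: "good al be (set (ann [(l, ov, s), (l, \<not> ov, s)] [hd R, d, hd R]))"
      using r1_ex[OF hX] by blast
    define cs where "cs = C1 @ hd R # d # R"
    have "good al be (set (ann ?w cs))" unfolding cs_def R1_split[OF l Rne disj]
      using csg gd unfolding dec R0_split[OF l Rne] by simp
    moreover have "set cs \<subseteq> X" using csX dX hX unfolding dec cs_def by auto
    moreover have "length cs = Suc (length ?w)" using l lR unfolding cs_def by simp
    moreover have "hd cs = p" using csh Rne unfolding dec cs_def by (cases C1) auto
    moreover have "last cs = q" using cst Rne unfolding dec cs_def by simp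
    ultimately have "cs \<in> CL X al be ?w p q" unfolding CL_def by blast
    moreover have "rel cs' cs" unfolding rel_def cs_def using dec l lR by blast
    ultimately show "\<exists>b. b \<in> CL X al be ?w p q \<and> rel cs' b" by blast
  next
    fix a1 a2 b assume r1: "rel a1 b" and r2: "rel a2 b"
    obtain C1 d R where l: "length C1 = length u" "length R = Suc (length v)"
      and a1d: "a1 = C1 @ R" and bd: "b = C1 @ hd R # d # R" using r1 unfolding rel_def by blast
    obtain C1' d' R' where l': "length C1' = length u" "length R' = Suc (length v)"
      and a2d: "a2 = C1' @ R'" and bd': "b = C1' @ hd R' # d' # R'" using r2 unfolding rel_def by blast
    have "C1' = C1 \<and> R' = R" using bd bd' l l' by (simp add: app_eq)
    then show "a1 = a2" using a1d a2d by simp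
  qed
qed

end

context bq begin

lemma R2_split:
  assumes l: "length C1 = length u" "length C2 = length v" "R \<noteq> []" and lb: "length blk1 = 2" "length blk2 = 2"
    and labs: "fst ` set blk1 \<union> fst ` set blk2 \<subseteq> L" and disj: "L \<inter> fst ` set (u @ v @ x) = {}"
  shows "good al be (set (ann (u @ blk1 @ v @ blk2 @ x) (C1 @ e1 # d1 # C2 @ e2 # d2 # R))) \<longleftrightarrow>
    good al be (set (ann u (C1 @ [e1])) \<union> set (ann v (C2 @ [e2])) \<union> set (ann x R)) \<and>
    good al be (set (ann blk1 [e1, d1, hd (C2 @ [e2])]) \<union> set (ann blk2 [e2, d2, hd R]))"
proof -
  let ?Out = "set (ann u (C1 @ [e1])) \<union> set (ann v (C2 @ [e2])) \<union> set (ann x R)"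
  let ?Loc = "set (ann blk1 [e1, d1, hd (C2 @ [e2])]) \<union> set (ann blk2 [e2, d2, hd R])"
  have 1: "set (ann (u @ blk1 @ v @ blk2 @ x) (C1 @ e1 # d1 # C2 @ e2 # d2 # R)) = ?Out \<union> ?Loc"
  proof -
    have "ann (u @ blk1 @ v @ blk2 @ x) (C1 @ e1 # d1 # C2 @ e2 # d2 # R) =
      ann u (C1 @ [e1]) @ ann blk1 [e1, d1, hd (C2 @ [e2])] @ ann v (C2 @ [e2]) @ ann blk2 [e2, d2, hd R] @ ann x R"
      using l lb by (simp add: ann_append ann_app2 hd_app_cons)
    then show ?thesis by auto
  qed
  have 2: "good al be (?Out \<union> ?Loc) = (good al be ?Out \<and> good al be ?Loc)"
  proof (rule good_Un)
    fix f1 f2 assume "f1 \<in> ?Out" "f2 \<in> ?Loc"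
    then have "fst (fst f1) \<in> fst ` set (u @ v @ x)" "fst (fst f2) \<in> L"
      using labs by (auto dest!: lab_ann_sub)
    then show "fst (fst f1) \<noteq> fst (fst f2)" using disj unfolding disjoint_iff by metis
  qed
  show ?thesis unfolding 1 2 ..
qed

lemma R2_gen:
  assumes lb: "length blk1 = 2" "length blk2 = 2"
    and labs: "fst ` set blk1 \<union> fst ` set blk2 \<subseteq> L" and disj: "L \<inter> fst ` set (u @ v @ x) = {}"
    and Lc: "\<And>p d1 p' r d2 r'. good al be (set (ann blk1 [p, d1, p']) \<union> set (ann blk2 [r, d2, r'])) = Lc p d1 p' r d2 r'"
    and Leq: "\<And>p d1 p' r d2 r'. p \<in> X \<Longrightarrow> d1 \<in> X \<Longrightarrow> p' \<in> X \<Longrightarrow> r \<in> X \<Longrightarrow> d2 \<in> X \<Longrightarrow> r' \<in> X \<Longrightarrow>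
        Lc p d1 p' r d2 r' \<Longrightarrow> p = p' \<and> r = r'"
    and Lex: "\<And>p r. p \<in> X \<Longrightarrow> r \<in> X \<Longrightarrow> \<exists>d1\<in>X. \<exists>d2\<in>X. Lc p d1 p r d2 r"
    and Lun: "\<And>p r d1 d2 e1 e2. p \<in> X \<Longrightarrow> r \<in> X \<Longrightarrow> d1 \<in> X \<Longrightarrow> d2 \<in> X \<Longrightarrow> e1 \<in> X \<Longrightarrow> e2 \<in> X \<Longrightarrow>
        Lc p d1 p r d2 r \<Longrightarrow> Lc p e1 p r e2 r \<Longrightarrow> d1 = e1 \<and> d2 = e2"
  shows "card (CL X al be (u @ blk1 @ v @ blk2 @ x) p q) = card (CL X al be (u @ v @ x) p q)"
    (is "card (CL X al be ?w p q) = card (CL X al be ?w' p q)")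
proof -
  have R0: "set (ann ?w' (C1 @ C2 @ R)) = set (ann u (C1 @ [hd (C2 @ R)])) \<union> set (ann v (C2 @ [hd R])) \<union> set (ann x R)"
    if "length C1 = length u" "length C2 = length v" "R \<noteq> []" for C1 C2 R
  proof -
    have "ann ?w' (C1 @ C2 @ R) = ann u (C1 @ [hd (C2 @ R)]) @ ann v (C2 @ [hd R]) @ ann x R"
      using that by (simp add: ann_append)
    then show ?thesis by auto
  qed
  define rel where "rel = (\<lambda>(cs::'a list) (cs'::'a list). \<exists>C1 e1 d1 C2 e2 d2 R. length C1 = length u \<and>
     length C2 = length v \<and> length R = Suc (length x) \<and>
     cs = C1 @ e1 # d1 # C2 @ e2 # d2 # R \<and> cs' = C1 @ C2 @ R)"
  have le1: "card (CL X al be ?w p q) \<le> card (CL X al be ?w' p q)"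
  proof (rule card_le_if_inj_on_rel[where r = rel])
    show "finite (CL X al be ?w' p q)" by (rule finite_CL[OF fin])
  next
    fix cs assume cs: "cs \<in> CL X al be ?w p q"
    then have csX: "set cs \<subseteq> X" and csl: "length cs = Suc (length ?w)" and csg: "good al be (set (ann ?w cs))"
      and csh: "hd cs = p" and cst: "last cs = q" unfolding CL_def by auto
    obtain C1 e1 d1 R1 where dec1: "cs = C1 @ e1 # d1 # R1" and l1: "length C1 = length u"
      using dec2[of "length u" cs] csl lb by auto
    have "length v + 2 \<le> length R1" using csl dec1 l1 lb by simp
    then obtain C2 e2 d2 R where dec2': "R1 = C2 @ e2 # d2 # R" and l2: "length C2 = length v"
      using dec2[of "length v" R1] by auto
    have lR: "length R = Suc (length x)" using csl dec1 dec2' l1 l2 lb by simp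
    then have Rne: "R \<noteq> []" by auto
    have dec: "cs = C1 @ e1 # d1 # C2 @ e2 # d2 # R" using dec1 dec2' by simp
    have G: "good al be (set (ann u (C1 @ [e1])) \<union> set (ann v (C2 @ [e2])) \<union> set (ann x R)) \<and>
      Lc e1 d1 (hd (C2 @ [e2])) e2 d2 (hd R)"
      using csg unfolding dec R2_split[OF l1 l2 Rne lb labs disj] Lc .
    have inX: "e1 \<in> X" "d1 \<in> X" "hd (C2 @ [e2]) \<in> X" "e2 \<in> X" "d2 \<in> X" "hd R \<in> X"
      using csX Rne unfolding dec by (auto intro!: hd_in)
    have pr: "e1 = hd (C2 @ [e2]) \<and> e2 = hd R" using Leq[OF inX conjunct2[OF G]] .
    define cs' where "cs' = C1 @ C2 @ R"
    have h2: "hd (C2 @ R) = e1" using pr hd_app_ne[OF Rne] by simp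
    have "good al be (set (ann ?w' cs'))" unfolding cs'_def R0[OF l1 l2 Rne] h2
      using conjunct1[OF G] pr by simp
    moreover have "set cs' \<subseteq> X" using csX unfolding dec cs'_def by auto
    moreover have "length cs' = Suc (length ?w')" using l1 l2 lR unfolding cs'_def by simp
    moreover have "hd cs' = p" using csh h2 unfolding dec cs'_def by (cases C1) auto
    moreover have "last cs' = q" using cst Rne unfolding dec cs'_def by simp
    ultimately have "cs' \<in> CL X al be ?w' p q" unfolding CL_def by blast
    moreover have "rel cs cs'" unfolding rel_def cs'_def using dec l1 l2 lR by blast
    ultimately show "\<exists>b. b \<in> CL X al be ?w' p q \<and> rel cs b" by blast
  next
    fix a1 a2 b assume a1: "a1 \<in> CL X al be ?w p q" and a2: "a2 \<in> CL X al be ?w p q"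
      and r1: "rel a1 b" and r2: "rel a2 b"
    obtain C1 e1 d1 C2 e2 d2 R where l: "length C1 = length u" "length C2 = length v" "length R = Suc (length x)"
      and a1d: "a1 = C1 @ e1 # d1 # C2 @ e2 # d2 # R" and bd: "b = C1 @ C2 @ R" using r1 unfolding rel_def by blast
    obtain C1' e1' d1' C2' e2' d2' R' where l': "length C1' = length u" "length C2' = length v" "length R' = Suc (length x)"
      and a2d: "a2 = C1' @ e1' # d1' # C2' @ e2' # d2' # R'" and bd': "b = C1' @ C2' @ R'" using r2 unfolding rel_def by blast
    have eqs: "C1' = C1 \<and> C2' = C2 \<and> R' = R" using bd bd' l l' by (simp add: app_eq)
    have Rne: "R \<noteq> []" using l by auto
    have a2d': "a2 = C1 @ e1' # d1' # C2 @ e2' # d2' # R" using a2d eqs by simp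
    have g1': "good al be (set (ann ?w a1))" and X1: "set a1 \<subseteq> X" using a1 unfolding CL_def by blast+
    have g2': "good al be (set (ann ?w a2))" and X2: "set a2 \<subseteq> X" using a2 unfolding CL_def by blast+
    have L1: "Lc e1 d1 (hd (C2 @ [e2])) e2 d2 (hd R)"
      using g1' unfolding a1d R2_split[OF l(1,2) Rne lb labs disj] Lc by blast
    have L2: "Lc e1' d1' (hd (C2 @ [e2'])) e2' d2' (hd R)"
      using g2' unfolding a2d' R2_split[OF l(1,2) Rne lb labs disj] Lc by blast
    have i1: "e1 \<in> X" "d1 \<in> X" "hd (C2 @ [e2]) \<in> X" "e2 \<in> X" "d2 \<in> X" "hd R \<in> X"
      using X1 Rne unfolding a1d by (auto intro!: hd_in)
    have i2: "e1' \<in> X" "d1' \<in> X" "hd (C2 @ [e2']) \<in> X" "e2' \<in> X" "d2' \<in> X" "hd R \<in> X"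
      using X2 Rne unfolding a2d' by (auto intro!: hd_in)
    have p1: "e1 = hd (C2 @ [e2]) \<and> e2 = hd R" using Leq[OF i1 L1] .
    have p2: "e1' = hd (C2 @ [e2']) \<and> e2' = hd R" using Leq[OF i2 L2] .
    have ee: "e2' = e2" "e1' = e1" using p1 p2 by auto
    have "d1 = d1' \<and> d2 = d2'"
      using Lun[OF i1(1,4,2,5) i2(2,5)] L1 L2 p1 ee by simp
    then show "a1 = a2" unfolding a1d a2d' using ee by simp
  qed
  define rel' where "rel' = (\<lambda>(cs'::'a list) (cs::'a list). \<exists>C1 C2 R d1 d2. length C1 = length u \<and>
     length C2 = length v \<and> length R = Suc (length x) \<and>
     cs' = C1 @ C2 @ R \<and> cs = C1 @ hd (C2 @ R) # d1 # C2 @ hd R # d2 # R)"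
  have le2: "card (CL X al be ?w' p q) \<le> card (CL X al be ?w p q)"
  proof (rule card_le_if_inj_on_rel[where r = rel'])
    show "finite (CL X al be ?w p q)" by (rule finite_CL[OF fin])
  next
    fix cs' assume cs: "cs' \<in> CL X al be ?w' p q"
    then have csX: "set cs' \<subseteq> X" and csl: "length cs' = Suc (length ?w')" and csg: "good al be (set (ann ?w' cs'))"
      and csh: "hd cs' = p" and cst: "last cs' = q" unfolding CL_def by auto
    obtain C1 R1 where dc1: "cs' = C1 @ R1" and l1: "length C1 = length u"
      using dec1[of "length u" cs'] csl by auto
    have "length v \<le> length R1" using csl dc1 l1 by simp
    then obtain C2 R where dec2': "R1 = C2 @ R" and l2: "length C2 = length v"
      using dec1[of "length v" R1] by auto
    have lR: "length R = Suc (length x)" using csl dc1 dec2' l1 l2 by simp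
    then have Rne: "R \<noteq> []" by auto
    have dec: "cs' = C1 @ C2 @ R" using dc1 dec2' by simp
    have hX: "hd (C2 @ R) \<in> X" "hd R \<in> X" using csX Rne hd_in_set[of "C2 @ R"] hd_in_set[of R] unfolding dec by auto
    obtain d1 d2 where dX: "d1 \<in> X" "d2 \<in> X" and Ld: "Lc (hd (C2 @ R)) d1 (hd (C2 @ R)) (hd R) d2 (hd R)"
      using Lex[OF hX] by blast
    define cs where "cs = C1 @ hd (C2 @ R) # d1 # C2 @ hd R # d2 # R"
    have hh: "hd (C2 @ [hd R]) = hd (C2 @ R)" using hd_app_ne[OF Rne] .
    have "good al be (set (ann ?w cs))" unfolding cs_def R2_split[OF l1 l2 Rne lb labs disj] Lc hh
      using csg Ld unfolding dec R0[OF l1 l2 Rne] by simp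
    moreover have "set cs \<subseteq> X" using csX dX hX unfolding dec cs_def by auto
    moreover have "length cs = Suc (length ?w)" using l1 l2 lR lb unfolding cs_def by simp
    moreover have "hd cs = p" using csh Rne unfolding dec cs_def by (cases C1) auto
    moreover have "last cs = q" using cst Rne unfolding dec cs_def by simp
    ultimately have "cs \<in> CL X al be ?w p q" unfolding CL_def by blast
    moreover have "rel' cs' cs" unfolding rel'_def cs_def using dec l1 l2 lR by blast
    ultimately show "\<exists>b. b \<in> CL X al be ?w p q \<and> rel' cs' b" by blast
  next
    fix a1 a2 b assume r1: "rel' a1 b" and r2: "rel' a2 b"
    obtain C1 C2 R d1 d2 where l: "length C1 = length u" "length C2 = length v" "length R = Suc (length x)"
      and a1d: "a1 = C1 @ C2 @ R" and bd: "b = C1 @ hd (C2 @ R) # d1 # C2 @ hd R # d2 # R" using r1 unfolding rel'_def by blast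
    obtain C1' C2' R' d1' d2' where l': "length C1' = length u" "length C2' = length v" "length R' = Suc (length x)"
      and a2d: "a2 = C1' @ C2' @ R'" and bd': "b = C1' @ hd (C2' @ R') # d1' # C2' @ hd R' # d2' # R'" using r2 unfolding rel'_def by blast
    have "C1' = C1 \<and> C2' = C2 \<and> R' = R" using bd bd' l l' by (simp add: app_eq)
    then show "a1 = a2" using a1d a2d by simp
  qed
  show ?thesis using le1 le2 by simp
qed

end

definition cnt :: "nat \<Rightarrow> letter list \<Rightarrow> nat" where
  "cnt l w = length (filter (\<lambda>e. fst e = l) w)"

lemma cnt_append[simp]: "cnt l (u @ v) = cnt l u + cnt l v" by (simp add: cnt_def)
lemma cnt_Cons[simp]: "cnt l (e # w) = (if fst e = l then Suc (cnt l w) else cnt l w)" by (simp add: cnt_def)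
lemma cnt_Nil[simp]: "cnt l [] = 0" by (simp add: cnt_def)
lemma cnt_zero: "cnt l w = 0 \<longleftrightarrow> l \<notin> fst ` set w"
  unfolding cnt_def by (auto simp: filter_empty_conv)

lemma valid_cnt: "valid_code w \<Longrightarrow> cnt l w \<le> 2"
proof (cases "l \<in> fst ` set w")
  case False then show ?thesis using cnt_zero[of l w] by simp
next
  case True
  assume v: "valid_code w"
  then obtain s i j where ij: "i < length w" "j < length w"
    and all: "\<forall>k<length w. fst (w ! k) = l \<longrightarrow> k = i \<or> k = j"
    using True unfolding valid_code_def by blast
  have "{k. k < length w \<and> fst (w ! k) = l} \<subseteq> {i, j}" using all by auto
  then have "card {k. k < length w \<and> fst (w ! k) = l} \<le> card {i, j}" by (rule card_mono[rotated]) simp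
  also have "\<dots> \<le> 2" by (simp add: card_insert_if)
  finally show ?thesis unfolding cnt_def length_filter_conv_card .
qed

lemma cnt_seg: "cnt l (r3_seg x y z sx sy sz a b c 0) = (if x = l then 1 else 0) + (if y = l then 1 else 0)"
  "cnt l (r3_seg x y z sx sy sz a b c 1) = (if x = l then 1 else 0) + (if z = l then 1 else 0)"
  "cnt l (r3_seg x y z sx sy sz a b c 2) = (if y = l then 1 else 0) + (if z = l then 1 else 0)"
  by (auto simp: r3_seg_def)

lemma cnt_segs:
  assumes "i < 3" "j < 3" "k < 3" "distinct [i, j, k]"
  shows "cnt l (r3_seg x y z sx sy sz a b c i) + cnt l (r3_seg x y z sx sy sz a b c j) + cnt l (r3_seg x y z sx sy sz a b c k)
    = 2 * ((if x = l then 1 else 0) + (if y = l then 1 else 0) + (if z = l then 1 else 0))"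
  using perm_cases[OF assms] by (elim disjE conjE) (simp_all add: r3_seg_def)

lemma r3_labels:
  assumes v: "valid_code (p1 @ r3_seg x y z sx sy sz a b c i @ p2 @ r3_seg x y z sx sy sz a b c j @ p3
       @ r3_seg x y z sx sy sz a b c k @ p4)"
    and ijk: "i < 3" "j < 3" "k < 3" "distinct [i, j, k]"
  shows "distinct [x, y, z] \<and> fst ` set (p1 @ p2 @ p3 @ p4) \<inter> {x, y, z} = {}"
proof -
  have c: "cnt l (p1 @ p2 @ p3 @ p4) + 2 * ((if x = l then 1 else 0) + (if y = l then 1 else 0) + (if z = l then 1 else 0)) \<le> 2" for l
    using valid_cnt[OF v, of l] cnt_segs[OF ijk, of l x y z sx sy sz a b c] by simp
  have cx: "cnt x (p1 @ p2 @ p3 @ p4) = 0" "y \<noteq> x" "z \<noteq> x" using c[of x] by (auto split: if_splits)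
  have cy: "cnt y (p1 @ p2 @ p3 @ p4) = 0" "z \<noteq> y" using c[of y] by (auto split: if_splits)
  have cz: "cnt z (p1 @ p2 @ p3 @ p4) = 0" using c[of z] by (auto split: if_splits)
  show ?thesis using cx cy cz unfolding cnt_zero by auto
qed

lemma ann_map: "ann (map F w) cs = map (\<lambda>(e, a, b). (F e, a, b)) (ann w cs)"
  by (induction w arbitrary: cs) auto

lemma good_relabel:
  assumes inj: "inj_on f (fst ` set w)"
  shows "good al be (set (ann (map (\<lambda>(l, ov, s). (f l, ov, s)) w) cs)) = good al be (set (ann w cs))"
proof -
  let ?F = "\<lambda>(l::nat, ov::bool, s::bool). (f l, ov, s)"
  let ?G = "\<lambda>(e, a::'a, b::'a). (?F e, a, b)"
  have S: "set (ann (map ?F w) cs) = ?G ` set (ann w cs)" by (simp add: ann_map)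
  have lab: "fst (fst e) \<in> fst ` set w" if "e \<in> set (ann w cs)" for e using lab_ann_sub[OF that] .
  show ?thesis unfolding S
  proof
    assume g: "good al be (?G ` set (ann w cs))"
    show "good al be (set (ann w cs))" unfolding good_def
    proof (intro allI impI)
      fix l s a a' b b'
      assume m1: "((l, True, s), a, a') \<in> set (ann w cs)" and m2: "((l, False, s), b, b') \<in> set (ann w cs)"
      have "((f l, True, s), a, a') \<in> ?G ` set (ann w cs)" using m1 by force
      moreover have "((f l, False, s), b, b') \<in> ?G ` set (ann w cs)" using m2 by force
      ultimately show "cr al be s a a' b b'" using g unfolding good_def by blast
    qed
  next
    assume g: "good al be (set (ann w cs))"
    show "good al be (?G ` set (ann w cs))" unfolding good_def
    proof (intro allI impI)
      fix l s a a' b b'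
      assume m1: "((l, True, s), a, a') \<in> ?G ` set (ann w cs)" and m2: "((l, False, s), b, b') \<in> ?G ` set (ann w cs)"
      obtain l1 where l1: "((l1, True, s), a, a') \<in> set (ann w cs)" "f l1 = l" using m1 by force
      obtain l2 where l2: "((l2, False, s), b, b') \<in> set (ann w cs)" "f l2 = l" using m2 by force
      have "l1 \<in> fst ` set w" "l2 \<in> fst ` set w" using lab[OF l1(1)] lab[OF l2(1)] by simp_all
      then have "l1 = l2" using inj l1(2) l2(2) unfolding inj_on_def by metis
      then show "cr al be s a a' b b'" using g l1(1) l2(1) unfolding good_def by blast
    qed
  qed
qed

lemma r3_ok_flip: "r3_ok sx sy sz oT oM oB \<Longrightarrow> r3_ok sx sy sz (\<not> oT) (\<not> oM) (\<not> oB)"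
  unfolding r3_ok_def by auto

context bq begin

lemma kmove_card: "kmove w w' \<Longrightarrow> card (CL X al be w p q) = card (CL X al be w' p q)"
proof (induction rule: kmove.induct)
  case (R1 u l ov s v)
  have "cnt l (u @ [(l, ov, s), (l, \<not> ov, s)] @ v) \<le> 2" using valid_cnt[OF R1] .
  then have "cnt l (u @ v) = 0" by simp
  then have d: "l \<notin> fst ` set (u @ v)" using cnt_zero by blast
  show ?case using R1_le1[OF d, of ov s p q] R1_le2[OF d, of p q ov s] by (rule le_antisym)
next
  case (R2_same u a ov s b v x)
  have c1: "cnt a (u @ [(a, ov, s), (b, ov, \<not> s)] @ v @ [(a, \<not> ov, s), (b, \<not> ov, \<not> s)] @ x) \<le> 2"
    and c2: "cnt b (u @ [(a, ov, s), (b, ov, \<not> s)] @ v @ [(a, \<not> ov, s), (b, \<not> ov, \<not> s)] @ x) \<le> 2"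
    by (rule valid_cnt[OF R2_same])+
  have ab: "a \<noteq> b" using c1 by (auto split: if_splits)
  have c0: "cnt a (u @ v @ x) = 0" "cnt b (u @ v @ x) = 0" using c1 c2 ab by (auto split: if_splits)
  have "a \<notin> fst ` set (u @ v @ x)" "b \<notin> fst ` set (u @ v @ x)"
    using cnt_zero[THEN iffD1, OF c0(1)] cnt_zero[THEN iffD1, OF c0(2)] .
  then have disj: "{a, b} \<inter> fst ` set (u @ v @ x) = {}" by auto
  show ?case
  proof (rule R2_gen[where L = "{a, b}" and Lc = "R2s ov s"])
    show "fst ` set [(a, ov, s), (b, ov, \<not> s)] \<union> fst ` set [(a, \<not> ov, s), (b, \<not> ov, \<not> s)] \<subseteq> {a, b}" by auto
    show "{a, b} \<inter> fst ` set (u @ v @ x) = {}" by (rule disj)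
    show "good al be (set (ann [(a, ov, s), (b, ov, \<not> s)] [p, d1, p']) \<union> set (ann [(a, \<not> ov, s), (b, \<not> ov, \<not> s)] [r, d2, r'])) =
      R2s ov s p d1 p' r d2 r'" for p d1 p' r d2 r'
      unfolding good_R2_same[OF ab] R2s_def ..
    show "length [(a, ov, s), (b, ov, \<not> s)] = 2" by simp
    show "length [(a, \<not> ov, s), (b, \<not> ov, \<not> s)] = 2" by simp
    show "\<And>p d1 p' r d2 r'. p \<in> X \<Longrightarrow> d1 \<in> X \<Longrightarrow> p' \<in> X \<Longrightarrow> r \<in> X \<Longrightarrow> d2 \<in> X \<Longrightarrow> r' \<in> X \<Longrightarrow>
        R2s ov s p d1 p' r d2 r' \<Longrightarrow> p = p' \<and> r = r'" by (rule R2s_eq)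
    show "\<And>p r. p \<in> X \<Longrightarrow> r \<in> X \<Longrightarrow> \<exists>d1\<in>X. \<exists>d2\<in>X. R2s ov s p d1 p r d2 r" by (rule R2s_ex)
    show "\<And>p r d1 d2 e1 e2. p \<in> X \<Longrightarrow> r \<in> X \<Longrightarrow> d1 \<in> X \<Longrightarrow> d2 \<in> X \<Longrightarrow> e1 \<in> X \<Longrightarrow> e2 \<in> X \<Longrightarrow>
        R2s ov s p d1 p r d2 r \<Longrightarrow> R2s ov s p e1 p r e2 r \<Longrightarrow> d1 = e1 \<and> d2 = e2" by (rule R2s_uniq)
  qed
next
  case (R2_opp u a ov s b v x)
  have c1: "cnt a (u @ [(a, ov, s), (b, ov, \<not> s)] @ v @ [(b, \<not> ov, \<not> s), (a, \<not> ov, s)] @ x) \<le> 2"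
    and c2: "cnt b (u @ [(a, ov, s), (b, ov, \<not> s)] @ v @ [(b, \<not> ov, \<not> s), (a, \<not> ov, s)] @ x) \<le> 2"
    by (rule valid_cnt[OF R2_opp])+
  have ab: "a \<noteq> b" using c1 by (auto split: if_splits)
  have c0: "cnt a (u @ v @ x) = 0" "cnt b (u @ v @ x) = 0" using c1 c2 ab by (auto split: if_splits)
  have "a \<notin> fst ` set (u @ v @ x)" "b \<notin> fst ` set (u @ v @ x)"
    using cnt_zero[THEN iffD1, OF c0(1)] cnt_zero[THEN iffD1, OF c0(2)] .
  then have disj: "{a, b} \<inter> fst ` set (u @ v @ x) = {}" by auto
  show ?case
  proof (rule R2_gen[where L = "{a, b}" and Lc = "R2o ov s"])
    show "fst ` set [(a, ov, s), (b, ov, \<not> s)] \<union> fst ` set [(b, \<not> ov, \<not> s), (a, \<not> ov, s)] \<subseteq> {a, b}" by auto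
    show "{a, b} \<inter> fst ` set (u @ v @ x) = {}" by (rule disj)
    show "good al be (set (ann [(a, ov, s), (b, ov, \<not> s)] [p, d1, p']) \<union> set (ann [(b, \<not> ov, \<not> s), (a, \<not> ov, s)] [r, d2, r'])) =
      R2o ov s p d1 p' r d2 r'" for p d1 p' r d2 r'
      unfolding good_R2_opp[OF ab] R2o_def ..
    show "length [(a, ov, s), (b, ov, \<not> s)] = 2" by simp
    show "length [(b, \<not> ov, \<not> s), (a, \<not> ov, s)] = 2" by simp
    show "\<And>p d1 p' r d2 r'. p \<in> X \<Longrightarrow> d1 \<in> X \<Longrightarrow> p' \<in> X \<Longrightarrow> r \<in> X \<Longrightarrow> d2 \<in> X \<Longrightarrow> r' \<in> X \<Longrightarrow>
        R2o ov s p d1 p' r d2 r' \<Longrightarrow> p = p' \<and> r = r'" by (rule R2o_eq)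
    show "\<And>p r. p \<in> X \<Longrightarrow> r \<in> X \<Longrightarrow> \<exists>d1\<in>X. \<exists>d2\<in>X. R2o ov s p d1 p r d2 r" by (rule R2o_ex)
    show "\<And>p r d1 d2 e1 e2. p \<in> X \<Longrightarrow> r \<in> X \<Longrightarrow> d1 \<in> X \<Longrightarrow> d2 \<in> X \<Longrightarrow> e1 \<in> X \<Longrightarrow> e2 \<in> X \<Longrightarrow>
        R2o ov s p d1 p r d2 r \<Longrightarrow> R2o ov s p e1 p r e2 r \<Longrightarrow> d1 = e1 \<and> d2 = e2" by (rule R2o_uniq)
  qed
next
  case (R3 i j k sx sy sz oT oM oB p1 x y z p2 p3 p4)
  have lab: "distinct [x, y, z] \<and> fst ` set (p1 @ p2 @ p3 @ p4) \<inter> {x, y, z} = {}"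
    using r3_labels[OF R3(6) R3(1-4)] .
  have le1: "card (CL X al be (p1 @ r3_seg x y z sx sy sz oT oM oB i @ p2 @ r3_seg x y z sx sy sz oT oM oB j @ p3
       @ r3_seg x y z sx sy sz oT oM oB k @ p4) p q)
    \<le> card (CL X al be (p1 @ r3_seg x y z sx sy sz (\<not> oT) (\<not> oM) (\<not> oB) i @ p2 @ r3_seg x y z sx sy sz (\<not> oT) (\<not> oM) (\<not> oB) j @ p3
       @ r3_seg x y z sx sy sz (\<not> oT) (\<not> oM) (\<not> oB) k @ p4) p q)"
    using R3_le[OF R3(5) R3(1-4) conjunct1[OF lab] conjunct2[OF lab]] .
  have le2: "card (CL X al be (p1 @ r3_seg x y z sx sy sz (\<not> oT) (\<not> oM) (\<not> oB) i @ p2 @ r3_seg x y z sx sy sz (\<not> oT) (\<not> oM) (\<not> oB) j @ p3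
       @ r3_seg x y z sx sy sz (\<not> oT) (\<not> oM) (\<not> oB) k @ p4) p q)
    \<le> card (CL X al be (p1 @ r3_seg x y z sx sy sz (\<not> \<not> oT) (\<not> \<not> oM) (\<not> \<not> oB) i @ p2 @ r3_seg x y z sx sy sz (\<not> \<not> oT) (\<not> \<not> oM) (\<not> \<not> oB) j @ p3
       @ r3_seg x y z sx sy sz (\<not> \<not> oT) (\<not> \<not> oM) (\<not> \<not> oB) k @ p4) p q)"
    using R3_le[OF r3_ok_flip[OF R3(5)] R3(1-4) conjunct1[OF lab] conjunct2[OF lab]] .
  show ?case using le1 le2 by simp
next
  case (relabel w f)
  have "CL X al be (map (\<lambda>(l, ov, s). (f l, ov, s)) w) p q = CL X al be w p q"
    unfolding CL_def good_relabel[OF relabel(2)] by simp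
  then show ?case by simp
qed

lemma equiv_card: "knotoid_equiv D D' \<Longrightarrow> card (CL X al be D p q) = card (CL X al be D' p q)"
  unfolding knotoid_equiv_def
proof (induction rule: equivclp_induct)
  case base then show ?case by simp
next
  case (step y z)
  then show ?case using kmove_card[of y z] kmove_card[of z y] by auto
qed

end

theorem mainTheorem1:
  fixes xs :: "'a list" and alpha beta :: "'a \<Rightarrow> 'a \<Rightarrow> 'a" and D D' :: "letter list"
  assumes "distinct xs"
    and "biquandle (set xs) alpha beta"
    and "valid_code D" and "valid_code D'"
    and "knotoid_equiv D D'"
  shows "coloring_matrix xs alpha beta D = coloring_matrix xs alpha beta D'"
proof -
  interpret bq "set xs" alpha beta by unfold_locales (simp_all add: assms(2))
  have "card (colorings (set xs) alpha beta D p q) = card (colorings (set xs) alpha beta D' p q)" for p q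
    unfolding card_colorings using equiv_card[OF assms(5)] .
  then show ?thesis unfolding coloring_matrix_def by simp
qed


end
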